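(* Suppose Assumptions (A1)–(A3) hold and let $\mathbf X^{(t)},\mathbf M^{(t)}$ be generated by the EDM algorithm with $\alpha>0$, $\beta\in[0,1)$. Then for every $t\ge0$, $$\mathbb E[f(\mathbf z^{(t+1)})]\le\mathbb E[f(\mathbf z^{(t)})]+\frac{\alpha^2L\beta}{2(1-\beta)}\mathbb E\|\bar{\mathbf m}^{(t-1)}\|^2+\frac{\alpha L^2}{2n}\mathbb E\|\mathbf X^{(t)}-\overline{\mathbf X}^{(t)}\|_{\mathrm F}^2+\frac{\alpha^2L\sigma^2}{2n}-\frac\alpha2\Big(1-\frac{\beta\alpha L}{1-\beta}-\alpha L\Big)\mathbb E\|\nabla\bar{\mathbf f}(\mathbf X^{(t)})\|^2-\frac\alpha2\mathbb E\|\nabla\bar{\mathbf f}(\overline{\mathbf X}^{(t)})\|^2.$$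
   Context: Setting. There are $n$ agents and parameters lie in $\mathbb R^d$. For each agent $i$ there is a data distribution $\mathcal D_i$ and a loss $F_i:\mathbb R^d\times\mathbb R^p\to\mathbb R$; $f_i(\mathbf x)=\mathbb E_{\bm\xi\sim\mathcal D_i}F_i(\mathbf x,\bm\xi)$, $f(\mathbf x)=\frac1n\sum_{i=1}^n f_i(\mathbf x)$, $f^\star=\inf_{\mathbf x}f(\mathbf x)$. For $\mathbf X\in\mathbb R^{n\times d}$ with rows $\mathbf x_1^\top,\dots,\mathbf x_n^\top$: $\nabla\mathbf f(\mathbf X)\in\mathbb R^{n\times d}$ has rows $\nabla f_i(\mathbf x_i)^\top$; for $\bm\Xi=(\bm\xi_1,\dots,\bm\xi_n)$, $\nabla\mathbf F(\mathbf X,\bm\Xi)$ has rows $\nabla F_i(\mathbf x_i,\bm\xi_i)^\top$ (gradients in $\mathbf x$); $\nabla\bar{\mathbf f}(\mathbf X)=\frac1n\sum_i\nabla f_i(\mathbf x_i)\in\mathbb R^d$; $\bar{\mathbf x}=\frac1n\mathbf X^\top\mathbf 1_n$, $\overline{\mathbf X}=\frac1n\mathbf 1_n\mathbf 1_n^\top\mathbf X$; $\mathbf P_{\mathbf I}=\mathbf I-\frac1n\mathbf 1_n\mathbf 1_n^\top$. $\|\cdot\|$ is the Euclidean norm, $\|\cdot\|_{\mathrm F}$ Frobenius, $\|\cdot\|_{\mathrm{op}}$ spectral. (A1) $\mathbf W=(w_{ij})\in\mathbb R^{n\times n}$ is symmetric, doubly stochastic ($\mathbf W\mathbf 1=\mathbf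 1$), has $w_{ii}>0$ for all $i$, nonnegative entries, smallest eigenvalue $>0$, and $\lambda:=\|\mathbf W-\frac1n\mathbf 1\mathbf 1^\top\|_{\mathrm{op}}<1$. (A2) Each $f_i$ is $L$-smooth ($\|\nabla f_i(\mathbf x)-\nabla f_i(\mathbf y)\|\le L\|\mathbf x-\mathbf y\|$) and bounded below. (A3) $\bm\Xi^{(t)}=(\bm\xi_1^{(t)},\dots,\bm\xi_n^{(t)})$ with $\bm\xi_i^{(t)}\sim\mathcal D_i$, all mutually independent over $i$ and $t\ge0$; $\mathcal F^{(t)}$ is the $\sigma$-algebra generated by $\bm\Xi^{(0)},\dots,\bm\Xi^{(t-1)}$; for every $\mathcal F^{(t)}$-measurable random $\mathbf x_i^{(t)}$: $\mathbb E[\nabla F_i(\mathbf x_i^{(t)},\bm\xi_i^{(t)})-\nabla f_i(\mathbf x_i^{(t)})\mid\mathcal F^{(t)}]=0$ and $\mathbb E[\|\nabla F_i(\mathbf x_i^{(t)},\bm\xi_i^{(t)})-\nabla f_i(\mathbf x_i^{(t)})\|^2\mid\mathcal F^{(t)}]\le\sigma^2$. EDM algorithm. Given $\alpha>0$, $\beta\in[0,1)$, $\mathbf x^{(0)}\in\mathbb R^d$: set $\mathbf X^{(-1)}=\mathbf X^{(0)}=\mathbf 1_n(\mathbf x^{(0)})^\top$, $\mathbf M^{(-1)}=\mathbf 0$; for $t\ge0$, $\mathbf M^{(t)}=\beta\mathbf M^{(t-1)}+(1-\beta)\nabla\mathbf F(\mathbf X^{(t)},\bm\Xi^{(t)})$;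 for $t\ge-1$, $\mathbf X^{(t+2)}=\mathbf W\big(2\mathbf X^{(t+1)}-\mathbf X^{(t)}-\alpha\mathbf M^{(t+1)}+\alpha\mathbf M^{(t)}\big)$. Write $\bar{\mathbf x}^{(t)}=\frac1n(\mathbf X^{(t)})^\top\mathbf 1_n$, $\bar{\mathbf m}^{(t)}=\frac1n(\mathbf M^{(t)})^\top\mathbf 1_n$ (so $\bar{\mathbf m}^{(-1)}=\mathbf 0$). Auxiliary sequence: $\mathbf z^{(0)}=\bar{\mathbf x}^{(0)}$ and $\mathbf z^{(t)}=\frac1{1-\beta}\bar{\mathbf x}^{(t)}-\frac{\beta}{1-\beta}\bar{\mathbf x}^{(t-1)}$ for $t\ge1$. *)

theory Defs
  imports "HOL-Probability.Probability"
begin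

text \<open>Agents are indexed by a finite type 'n (n = CARD('n)); parameters live in real^'d;
  a configuration matrix X in R^{n x d} is a function 'n => real^'d (row i = x_i).\<close>

definition avg :: "('n::finite \<Rightarrow> 'v::real_vector) \<Rightarrow> 'v" where
  "avg v = (1 / real CARD('n)) *\<^sub>R (\<Sum>i\<in>UNIV. v i)"

definition mix :: "real^'n^'n \<Rightarrow> ('n::finite \<Rightarrow> 'v::real_vector) \<Rightarrow> ('n \<Rightarrow> 'v)" where
  "mix W X = (\<lambda>i. \<Sum>j\<in>UNIV. (W $ i $ j) *\<^sub>R X j)"

definition mixing_matrix :: "real^'n^'n \<Rightarrow> bool" where
  "mixing_matrix W \<longleftrightarrow>
     transpose W = W
   \<and> W *v (\<chi> i. 1) = (\<chi> i. 1)
   \<and> (\<forall>i. W $ i $ i > 0)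
   \<and> (\<forall>i j. W $ i $ j \<ge> 0)
   \<and> (\<forall>\<mu> v. v \<noteq> 0 \<and> W *v v = \<mu> *\<^sub>R v \<longrightarrow> \<mu> > 0)
   \<and> onorm (\<lambda>v. (W - (\<chi> i j. 1 / real CARD('n))) *v v) < 1"

definition filt :: "'a measure \<Rightarrow> ('n \<Rightarrow> nat \<Rightarrow> 'a \<Rightarrow> 'b::topological_space) \<Rightarrow> nat \<Rightarrow> 'a measure" where
  "filt M \<xi> t = sigma (space M)
     {\<xi> i s -` B \<inter> space M | i s B. s < t \<and> B \<in> sets borel}"

text \<open>EDM iterates: X t = X^(t) for t >= 0 (X^(-1) = X^(0)),
  Mm t = M^(t) for t >= 0 (M^(-1) = 0); gF i x \<xi> is the x-gradient of F_i.\<close>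
definition edm_iterates ::
  "real^'n^'n \<Rightarrow> real \<Rightarrow> real \<Rightarrow> ('n::finite \<Rightarrow> 'v \<Rightarrow> 'p \<Rightarrow> 'v::real_vector)
   \<Rightarrow> ('n \<Rightarrow> nat \<Rightarrow> 'a \<Rightarrow> 'p) \<Rightarrow> 'v
   \<Rightarrow> (nat \<Rightarrow> 'a \<Rightarrow> 'n \<Rightarrow> 'v) \<Rightarrow> (nat \<Rightarrow> 'a \<Rightarrow> 'n \<Rightarrow> 'v) \<Rightarrow> bool" where
  "edm_iterates W \<alpha> \<beta> gF \<xi> x0 X Mm \<longleftrightarrow>
     (\<forall>\<omega>. X 0 \<omega> = (\<lambda>i. x0))
   \<and> (\<forall>\<omega>. Mm 0 \<omega> = (\<lambda>i. (1 - \<beta>) *\<^sub>R gF i (X 0 \<omega> i) (\<xi> i 0 \<omega>)))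
   \<and> (\<forall>t \<omega>. Mm (Suc t) \<omega> = (\<lambda>i. \<beta> *\<^sub>R Mm t \<omega> i
                              + (1 - \<beta>) *\<^sub>R gF i (X (Suc t) \<omega> i) (\<xi> i (Suc t) \<omega>)))
   \<and> (\<forall>\<omega>. X 1 \<omega> = mix W (\<lambda>j. 2 *\<^sub>R X 0 \<omega> j - X 0 \<omega> j - \<alpha> *\<^sub>R Mm 0 \<omega> j + \<alpha> *\<^sub>R 0))
   \<and> (\<forall>t \<omega>. X (Suc (Suc t)) \<omega> =
        mix W (\<lambda>j. 2 *\<^sub>R X (Suc t) \<omega> j - X t \<omega> j - \<alpha> *\<^sub>R Mm (Suc t) \<omega> j + \<alpha> *\<^sub>R Mm t \<omega> j))"

definition zseq :: "real \<Rightarrow> (nat \<Rightarrow> 'a \<Rightarrow> 'n::finite \<Rightarrow> 'v::real_vector) \<Rightarrow> nat \<Rightarrow> 'a \<Rightarrow> 'v" where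
  "zseq \<beta> X t \<omega> = (if t = 0 then avg (X 0 \<omega>)
     else (1 / (1 - \<beta>)) *\<^sub>R avg (X t \<omega>) - (\<beta> / (1 - \<beta>)) *\<^sub>R avg (X (t - 1) \<omega>))"

definition mbar_prev :: "(nat \<Rightarrow> 'a \<Rightarrow> 'n::finite \<Rightarrow> 'v::real_vector) \<Rightarrow> nat \<Rightarrow> 'a \<Rightarrow> 'v" where
  "mbar_prev Mm t \<omega> = (if t = 0 then 0 else avg (Mm (t - 1) \<omega>))"

end

theory Submission
  imports Defs
begin

lemma r1: fixes x xp mp m g \<alpha> \<beta> :: real
  assumes "\<beta> \<noteq> 1" "x = xp - \<alpha>*mp" "m = \<beta>*mp + (1-\<beta>)*g"
  shows "1/(1-\<beta>)*(x - \<alpha>*m) - \<beta>/(1-\<beta>)*x = (1/(1-\<beta>)*x - \<beta>/(1-\<beta>)*xp) - \<alpha>*g"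
proof -
  have b: "1 - \<beta> \<noteq> 0" using assms by simp
  show ?thesis unfolding assms(2,3) using b by (simp add: divide_simps) algebra
qed
lemma r0: fixes x m g \<alpha> \<beta> :: real
  assumes "\<beta> \<noteq> 1" "m = (1-\<beta>)*g"
  shows "1/(1-\<beta>)*(x - \<alpha>*m) - \<beta>/(1-\<beta>)*x = x - \<alpha>*g"
proof -
  have b: "1 - \<beta> \<noteq> 0" using assms by simp
  show ?thesis unfolding assms(2) using b by (simp add: divide_simps) algebra
qed
lemma r2: fixes x xp mp \<alpha> \<beta> :: real
  assumes "\<beta> \<noteq> 1" "x = xp - \<alpha>*mp"
  shows "1/(1-\<beta>)*x - \<beta>/(1-\<beta>)*xp = x - \<alpha>*\<beta>/(1-\<beta>)*mp"
proof -
  have b: "1 - \<beta> \<noteq> 0" using assms by simp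
  show ?thesis unfolding assms(2) using b by (simp add: divide_simps) algebra
qed

lemma lin1: fixes a b c d :: "'v::real_vector"
  shows "a = b - \<alpha> *\<^sub>R d \<Longrightarrow> 2 *\<^sub>R a - b - \<alpha> *\<^sub>R c + \<alpha> *\<^sub>R d = a - \<alpha> *\<^sub>R c"
  by (simp add: scaleR_2 algebra_simps)

lemma lin0: fixes a c :: "'v::real_vector"
  shows "2 *\<^sub>R a - a - \<alpha> *\<^sub>R c + \<alpha> *\<^sub>R 0 = a - \<alpha> *\<^sub>R c"
  by (simp add: scaleR_2 algebra_simps)

locale edm = prob_space M
  for M :: "'a measure" +
  fixes W :: "real^'n::finite^'n"
    and gF :: "'n \<Rightarrow> real^'d::finite \<Rightarrow> real^'p::finite \<Rightarrow> real^'d"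
    and gf :: "'n \<Rightarrow> real^'d \<Rightarrow> real^'d"
    and f :: "'n \<Rightarrow> real^'d \<Rightarrow> real"
    and \<xi> :: "'n \<Rightarrow> nat \<Rightarrow> 'a \<Rightarrow> real^'p"
    and X Mm :: "nat \<Rightarrow> 'a \<Rightarrow> 'n \<Rightarrow> real^'d"
    and x0 :: "real^'d"
    and \<alpha> \<beta> L \<sigma> :: real
  assumes A1: "mixing_matrix W"
    and gF_meas: "\<And>i. (\<lambda>(x, s). gF i x s) \<in> borel_measurable borel"
    and grad_f: "\<And>i x. GDERIV (f i) x :> gf i x"
    and smooth: "\<And>i x y. norm (gf i x - gf i y) \<le> L * norm (x - y)"
    and bdd_below: "\<And>i. \<exists>b. \<forall>x. b \<le> f i x"
    and \<xi>_meas: "\<And>i s. \<xi> i s \<in> borel_measurable M"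
    and \<xi>_indep: "indep_vars (\<lambda>_. borel) (\<lambda>(i, s). \<xi> i s) UNIV"
    and unbiased: "\<And>s i y j. y \<in> borel_measurable (filt M \<xi> s) \<Longrightarrow>
        AE \<omega> in M. real_cond_exp M (filt M \<xi> s)
           (\<lambda>\<omega>. (gF i (y \<omega>) (\<xi> i s \<omega>) - gf i (y \<omega>)) $ j) \<omega> = 0"
    and variance: "\<And>s i y. y \<in> borel_measurable (filt M \<xi> s) \<Longrightarrow>
        AE \<omega> in M. nn_cond_exp M (filt M \<xi> s)
           (\<lambda>\<omega>. ennreal ((norm (gF i (y \<omega>) (\<xi> i s \<omega>) - gf i (y \<omega>)))\<^sup>2)) \<omega> \<le> ennreal (\<sigma>\<^sup>2)"
    and alpha: "\<alpha> > 0"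
    and beta: "0 \<le> \<beta>" "\<beta> < 1"
    and iter: "edm_iterates W \<alpha> \<beta> gF \<xi> x0 X Mm"
begin

lemma avg_add: "avg (\<lambda>i. u i + v i) = avg u + avg (v :: 'n \<Rightarrow> real^'d)" for u :: "'n \<Rightarrow> real^'d"
  by (simp add: avg_def sum.distrib scaleR_add_right)
lemma avg_diff: "avg (\<lambda>i. u i - v i) = avg u - avg (v :: 'n \<Rightarrow> real^'d)" for u :: "'n \<Rightarrow> real^'d"
  by (simp add: avg_def sum_subtractf scaleR_diff_right)
lemma avg_scale: "avg (\<lambda>i. c *\<^sub>R u i) = c *\<^sub>R avg (u :: 'n \<Rightarrow> real^'d)"
  by (simp add: avg_def scaleR_sum_right)
lemma avg_const: "avg (\<lambda>i::'n. c) = (c::real^'d)"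
  unfolding avg_def sum_constant_scaleR by simp

lemma colsum: "(\<Sum>i\<in>UNIV. W $ i $ j) = 1"
proof -
  have T: "transpose W = W" and R: "W *v (\<chi> i. 1) = (\<chi> i. 1)" using A1 by (auto simp: mixing_matrix_def)
  have "W $ i $ j = W $ j $ i" for i
    using arg_cong[OF T, of "\<lambda>A. A $ j $ i"] by (simp add: transpose_def)
  hence "(\<Sum>i\<in>UNIV. W $ i $ j) = (\<Sum>i\<in>UNIV. W $ j $ i * 1)" by simp
  also have "\<dots> = (W *v (\<chi> i. 1)) $ j" by (simp add: matrix_vector_mult_def)
  also have "\<dots> = 1" using R by simp
  finally show ?thesis .
qed

lemma avg_mix: "avg (mix W v) = avg (v :: 'n \<Rightarrow> real^'d)"
proof -
  have "(\<Sum>i\<in>UNIV. mix W v i) = (\<Sum>j\<in>UNIV. (\<Sum>i\<in>UNIV. W $ i $ j) *\<^sub>R v j)"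
    unfolding mix_def by (subst sum.swap) (simp add: scaleR_sum_left)
  also have "\<dots> = (\<Sum>j\<in>UNIV. v j)" by (simp add: colsum)
  finally show ?thesis by (simp add: avg_def)
qed

lemma iterD:
  "X 0 \<omega> = (\<lambda>i. x0)"
  "Mm 0 \<omega> = (\<lambda>i. (1 - \<beta>) *\<^sub>R gF i (X 0 \<omega> i) (\<xi> i 0 \<omega>))"
  "Mm (Suc t) \<omega> = (\<lambda>i. \<beta> *\<^sub>R Mm t \<omega> i + (1 - \<beta>) *\<^sub>R gF i (X (Suc t) \<omega> i) (\<xi> i (Suc t) \<omega>))"
  "X (Suc 0) \<omega> = mix W (\<lambda>j. 2 *\<^sub>R X 0 \<omega> j - X 0 \<omega> j - \<alpha> *\<^sub>R Mm 0 \<omega> j + \<alpha> *\<^sub>R 0)"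
  "X (Suc (Suc t)) \<omega> = mix W (\<lambda>j. 2 *\<^sub>R X (Suc t) \<omega> j - X t \<omega> j - \<alpha> *\<^sub>R Mm (Suc t) \<omega> j + \<alpha> *\<^sub>R Mm t \<omega> j)"
  using iter[unfolded edm_iterates_def One_nat_def] by simp_all

definition gbar :: "nat \<Rightarrow> 'a \<Rightarrow> real^'d" where
  "gbar t \<omega> = avg (\<lambda>i. gF i (X t \<omega> i) (\<xi> i t \<omega>))"

lemma xbar_step: "avg (X (Suc t) \<omega>) = avg (X t \<omega>) - \<alpha> *\<^sub>R avg (Mm t \<omega>)"
proof (induction t)
  case 0
  show ?case unfolding iterD(4) avg_mix iterD(1)
    apply (simp only: avg_add avg_diff avg_scale avg_const)
    by (rule lin0)
next
  case (Suc t)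
  show ?case unfolding iterD(5) avg_mix
    apply (simp only: avg_add avg_diff avg_scale)
    by (rule lin1[OF Suc])
qed

lemma mbar0: "avg (Mm 0 \<omega>) = (1 - \<beta>) *\<^sub>R gbar 0 \<omega>"
  unfolding gbar_def by (subst iterD(2)) (simp add: avg_scale)
lemma mbarS: "avg (Mm (Suc t) \<omega>) = \<beta> *\<^sub>R avg (Mm t \<omega>) + (1 - \<beta>) *\<^sub>R gbar (Suc t) \<omega>"
  unfolding gbar_def by (subst iterD(3)) (simp add: avg_scale avg_add)

lemma compeq: "u = v \<Longrightarrow> u $ k = v $ k" by simp

lemma z_step: "zseq \<beta> X (Suc t) \<omega> = zseq \<beta> X t \<omega> - \<alpha> *\<^sub>R gbar t \<omega>"
proof (rule vec_eq_iff[THEN iffD2], rule allI)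
  fix k
  have b: "\<beta> \<noteq> 1" using beta by simp
  have e1: "avg (X (Suc t) \<omega>) $ k = avg (X t \<omega>) $ k - \<alpha> * avg (Mm t \<omega>) $ k"
    using compeq[OF xbar_step[of t \<omega>], of k] by simp
  have zS: "zseq \<beta> X (Suc t) \<omega> $ k = 1/(1-\<beta>) * (avg (X t \<omega>) $ k - \<alpha> * avg (Mm t \<omega>) $ k) - \<beta>/(1-\<beta>) * avg (X t \<omega>) $ k"
    unfolding zseq_def by (simp only: nat.distinct if_False vector_minus_component vector_scaleR_component e1 diff_Suc_1 real_scaleR_def)
  show "zseq \<beta> X (Suc t) \<omega> $ k = (zseq \<beta> X t \<omega> - \<alpha> *\<^sub>R gbar t \<omega>) $ k"
  proof (cases t)
    case 0
    have e3: "avg (Mm t \<omega>) $ k = (1 - \<beta>) * gbar t \<omega> $ k"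
      using compeq[OF mbar0, of \<omega> k] 0 by simp
    have zt: "zseq \<beta> X t \<omega> $ k = avg (X t \<omega>) $ k" using 0 by (simp add: zseq_def)
    show ?thesis unfolding zS vector_minus_component vector_scaleR_component zt real_scaleR_def
      by (rule r0[OF b e3])
  next
    case (Suc t')
    have e2: "avg (X t \<omega>) $ k = avg (X t' \<omega>) $ k - \<alpha> * avg (Mm t' \<omega>) $ k"
      using compeq[OF xbar_step[of t' \<omega>], of k] Suc by simp
    have e3: "avg (Mm t \<omega>) $ k = \<beta> * avg (Mm t' \<omega>) $ k + (1 - \<beta>) * gbar t \<omega> $ k"
      using compeq[OF mbarS[of t' \<omega>], of k] Suc by simp
    have zt: "zseq \<beta> X t \<omega> $ k = 1/(1-\<beta>) * avg (X t \<omega>) $ k - \<beta>/(1-\<beta>) * avg (X t' \<omega>) $ k"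
      unfolding zseq_def Suc by (simp only: nat.distinct if_False vector_minus_component vector_scaleR_component diff_Suc_1 real_scaleR_def)
    show ?thesis unfolding zS vector_minus_component vector_scaleR_component zt real_scaleR_def
      by (rule r1[OF b e2 e3])
  qed
qed

lemma z_x: "zseq \<beta> X t \<omega> = avg (X t \<omega>) - (\<alpha> * \<beta> / (1 - \<beta>)) *\<^sub>R mbar_prev Mm t \<omega>"
proof (cases t)
  case 0 then show ?thesis by (simp add: zseq_def mbar_prev_def)
next
  case (Suc t')
  have b: "\<beta> \<noteq> 1" using beta by simp
  show ?thesis
  proof (rule vec_eq_iff[THEN iffD2], rule allI)
    fix k
    have e2: "avg (X t \<omega>) $ k = avg (X t' \<omega>) $ k - \<alpha> * avg (Mm t' \<omega>) $ k"
      using compeq[OF xbar_step[of t' \<omega>], of k] Suc by simp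
    have zt: "zseq \<beta> X t \<omega> $ k = 1/(1-\<beta>) * avg (X t \<omega>) $ k - \<beta>/(1-\<beta>) * avg (X t' \<omega>) $ k"
      unfolding zseq_def Suc by (simp only: nat.distinct if_False vector_minus_component vector_scaleR_component diff_Suc_1 real_scaleR_def)
    have mp: "mbar_prev Mm t \<omega> = avg (Mm t' \<omega>)" using Suc by (simp add: mbar_prev_def)
    show "zseq \<beta> X t \<omega> $ k = (avg (X t \<omega>) - (\<alpha> * \<beta> / (1 - \<beta>)) *\<^sub>R mbar_prev Mm t \<omega>) $ k"
      unfolding zt mp vector_minus_component vector_scaleR_component real_scaleR_def
      by (rule r2[OF b e2])
  qed
qed

end

lemma descent_gen:
  fixes \<phi> :: "'v::real_inner \<Rightarrow> real"
  assumes gd: "\<And>x. GDERIV \<phi> x :> g x"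
    and lip: "\<And>x y. norm (g x - g y) \<le> L * norm (x - y)"
  shows "\<phi> y \<le> \<phi> x + inner (g x) (y - x) + L / 2 * (norm (y - x))\<^sup>2"
proof -
  define u where "u = y - x"
  have d: "((\<lambda>s. \<phi> (x + s *\<^sub>R u)) has_real_derivative inner u (g (x + s *\<^sub>R u))) (at s)" for s
  proof -
    have 1: "((\<lambda>s. x + s *\<^sub>R u) has_derivative (\<lambda>h. h *\<^sub>R u)) (at s)"
      by (auto intro!: derivative_eq_intros)
    have 2: "(\<phi> has_derivative (\<lambda>h. inner h (g (x + s *\<^sub>R u)))) (at (x + s *\<^sub>R u))"
      using gd unfolding gderiv_def by blast
    have "((\<lambda>s. \<phi> (x + s *\<^sub>R u)) has_derivative (\<lambda>h. inner (h *\<^sub>R u) (g (x + s *\<^sub>R u)))) (at s)"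
      using has_derivative_compose[OF 1 2] by simp
    moreover have "(\<lambda>h. inner (h *\<^sub>R u) (g (x + s *\<^sub>R u))) = (*) (inner u (g (x + s *\<^sub>R u)))"
      by (auto simp: fun_eq_iff)
    ultimately show ?thesis unfolding has_field_derivative_def by simp
  qed
  define \<psi> where "\<psi> s = \<phi> (x + s *\<^sub>R u) - s * inner (g x) u - L / 2 * s\<^sup>2 * (norm u)\<^sup>2" for s
  have dpsi: "(\<psi> has_real_derivative (inner u (g (x + s *\<^sub>R u)) - inner (g x) u - L / 2 * (2 * s) * (norm u)\<^sup>2)) (at s)" for s
    unfolding \<psi>_def
    by (rule derivative_eq_intros d refl)+ (simp add: inner_commute[of "g x" u])
  have nonpos: "inner u (g (x + s *\<^sub>R u)) - inner (g x) u - L / 2 * (2 * s) * (norm u)\<^sup>2 \<le> 0" if "0 \<le> s" for s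
  proof -
    have "inner u (g (x + s *\<^sub>R u)) - inner (g x) u = inner u (g (x + s *\<^sub>R u) - g x)"
      by (simp add: inner_diff_right inner_commute[of "g x" u])
    also have "\<dots> \<le> norm u * norm (g (x + s *\<^sub>R u) - g x)"
      by (rule order_trans[OF _ Cauchy_Schwarz_ineq2]) simp
    also have "\<dots> \<le> norm u * (L * norm (s *\<^sub>R u))"
      using lip[of "x + s *\<^sub>R u" x] by (intro mult_left_mono) auto
    also have "\<dots> = L * s * (norm u)\<^sup>2" using that by (simp add: power2_eq_square)
    finally show ?thesis by simp
  qed
  have "\<psi> 1 \<le> \<psi> 0"
  proof (rule DERIV_nonpos_imp_nonincreasing[of 0 1])
    fix s :: real assume "0 \<le> s" "s \<le> 1"
    then show "\<exists>y. (\<psi> has_real_derivative y) (at s) \<and> y \<le> 0"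
      using dpsi[of s] nonpos[of s] by blast
  qed simp
  then show ?thesis unfolding \<psi>_def u_def by (simp add: inner_commute[of "g x" u])
qed


lemma norm_avg_le: "norm (avg (v :: 'n::finite \<Rightarrow> 'v::real_normed_vector)) \<le> avg (\<lambda>i. norm (v i))"
  unfolding avg_def by (simp add: divide_right_mono norm_sum)

lemma norm_avg_sq: "(norm (avg (v :: 'n::finite \<Rightarrow> 'v::real_normed_vector)))\<^sup>2 \<le> avg (\<lambda>i. (norm (v i))\<^sup>2)"
proof -
  have "(norm (avg v))\<^sup>2 \<le> (avg (\<lambda>i. norm (v i)))\<^sup>2"
    using norm_avg_le[of v] by (intro power_mono) auto
  also have "\<dots> = (\<Sum>i\<in>UNIV. norm (v i))\<^sup>2 / (real CARD('n))\<^sup>2"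
    by (simp add: avg_def power_divide)
  also have "\<dots> \<le> ((\<Sum>i\<in>UNIV. (norm (v i))\<^sup>2) * real CARD('n)) / (real CARD('n))\<^sup>2"
    by (intro divide_right_mono sum_squared_le_sum_of_squares) auto
  also have "\<dots> = avg (\<lambda>i. (norm (v i))\<^sup>2)"
    by (simp add: avg_def power2_eq_square)
  finally show ?thesis .
qed

context edm begin

definition G :: "real^'d \<Rightarrow> real^'d" where "G v = avg (\<lambda>i. gf i v)"
definition fb :: "real^'d \<Rightarrow> real" where "fb v = (1 / real CARD('n)) * (\<Sum>i\<in>UNIV. f i v)"

lemma L_nonneg: "0 \<le> L"
proof -
  obtain k :: 'd where True by blast
  define y :: "real^'d" where "y = axis k 1"
  have "y \<noteq> 0" by (simp add: y_def axis_eq_0_iff)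
  hence "0 < norm (0 - y)" by simp
  moreover have "0 \<le> L * norm (0 - y)" using smooth[of undefined 0 y] norm_ge_zero
    by (rule order_trans[rotated])
  ultimately show ?thesis by (simp add: zero_le_mult_iff)
qed

lemma G_lip: "norm (G x - G y) \<le> L * norm (x - y)"
proof -
  have "G x - G y = avg (\<lambda>i. gf i x - gf i y)" by (simp add: G_def avg_diff)
  hence "norm (G x - G y) \<le> avg (\<lambda>i. norm (gf i x - gf i y))" using norm_avg_le by metis
  also have "\<dots> \<le> avg (\<lambda>i::'n. L * norm (x - y))"
    unfolding avg_def real_scaleR_def by (intro mult_left_mono sum_mono smooth) auto
  also have "\<dots> = L * norm (x - y)" by (simp add: avg_def)
  finally show ?thesis .
qed

lemma inner_avg: "inner (avg u) w = avg (\<lambda>i. inner (u i) w)" for u :: "'n \<Rightarrow> real^'d"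
  by (simp add: avg_def inner_sum_left)

lemma fb_descent: "fb y \<le> fb x + inner (G x) (y - x) + L / 2 * (norm (y - x))\<^sup>2"
proof -
  have "f i y \<le> f i x + inner (gf i x) (y - x) + L / 2 * (norm (y - x))\<^sup>2" for i
    by (rule descent_gen[OF grad_f smooth])
  hence "(\<Sum>i\<in>UNIV. f i y) \<le> (\<Sum>i\<in>UNIV. f i x + inner (gf i x) (y - x) + L / 2 * (norm (y - x))\<^sup>2)"
    by (intro sum_mono)
  hence "(1 / real CARD('n)) * (\<Sum>i\<in>UNIV. f i y) \<le> (1 / real CARD('n)) * (\<Sum>i\<in>UNIV. f i x + inner (gf i x) (y - x) + L / 2 * (norm (y - x))\<^sup>2)"
    by (intro mult_left_mono) auto
  also have "\<dots> = fb x + inner (G x) (y - x) + L / 2 * (norm (y - x))\<^sup>2"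
    by (simp add: fb_def G_def inner_avg sum.distrib avg_def distrib_left inner_sum_left)
  finally show ?thesis unfolding fb_def .
qed

end

lemma coef_eq:
  fixes fz nm nb S N ng B be ne \<alpha> \<beta> L :: real
  assumes "\<beta> < 1" "N > 0"
  shows "fz + \<alpha>*L*(\<alpha>*\<beta>/(1-\<beta>))/2*(nm+nb) + (\<alpha>/2*(L\<^sup>2/N*S) - \<alpha>/2*ng - \<alpha>/2*nb) - \<alpha>*B + L/2*\<alpha>\<^sup>2*(nb + 2*be + ne)
    = fz + \<alpha>\<^sup>2 * L * \<beta> / (2 * (1 - \<beta>)) * nm + \<alpha> * L\<^sup>2 / (2 * N) * S
      - \<alpha> / 2 * (1 - \<beta> * \<alpha> * L / (1 - \<beta>) - \<alpha> * L) * nb - \<alpha> / 2 * ng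
      + (- \<alpha> * B + \<alpha>\<^sup>2 * L * be + \<alpha>\<^sup>2 * L / 2 * ne)"
proof -
  have "1 - \<beta> \<noteq> 0" using assms by simp
  then show ?thesis using assms by (simp add: divide_simps) algebra
qed

context edm begin

lemma pointwise:
  fixes xs :: "'n \<Rightarrow> real^'d" and m e :: "real^'d"
  defines "xb \<equiv> avg xs" and "b \<equiv> avg (\<lambda>i. gf i (xs i))" and "c \<equiv> \<alpha> * \<beta> / (1 - \<beta>)"
  defines "z \<equiv> xb - c *\<^sub>R m"
  shows "fb (z - \<alpha> *\<^sub>R (b + e)) \<le> fb z + \<alpha>\<^sup>2 * L * \<beta> / (2 * (1 - \<beta>)) * (norm m)\<^sup>2
      + \<alpha> * L\<^sup>2 / (2 * real CARD('n)) * (\<Sum>i\<in>UNIV. (norm (xs i - xb))\<^sup>2)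
      - \<alpha> / 2 * (1 - \<beta> * \<alpha> * L / (1 - \<beta>) - \<alpha> * L) * (norm b)\<^sup>2
      - \<alpha> / 2 * (norm (G xb))\<^sup>2
      + (- \<alpha> * inner (G z) e + \<alpha>\<^sup>2 * L * inner b e + \<alpha>\<^sup>2 * L / 2 * (norm e)\<^sup>2)"
proof -
  have L0: "0 \<le> L" by (rule L_nonneg)
  have c0: "0 \<le> c" using alpha beta unfolding c_def by simp
  define N where "N = real CARD('n)"
  have N0: "N > 0" by (simp add: N_def)
  define S where "S = (\<Sum>i\<in>UNIV. (norm (xs i - xb))\<^sup>2)"
  have d: "fb (z - \<alpha> *\<^sub>R (b + e)) \<le> fb z - \<alpha> * inner (G z) b - \<alpha> * inner (G z) e
      + L/2*\<alpha>\<^sup>2*((norm b)\<^sup>2 + 2 * inner b e + (norm e)\<^sup>2)"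
  proof -
    have "fb (z - \<alpha> *\<^sub>R (b + e)) \<le> fb z + inner (G z) ((z - \<alpha> *\<^sub>R (b + e)) - z) + L / 2 * (norm ((z - \<alpha> *\<^sub>R (b + e)) - z))\<^sup>2"
      by (rule fb_descent)
    also have "inner (G z) ((z - \<alpha> *\<^sub>R (b + e)) - z) = - \<alpha> * inner (G z) b - \<alpha> * inner (G z) e"
      by (simp add: inner_add_right algebra_simps)
    also have "(norm ((z - \<alpha> *\<^sub>R (b + e)) - z))\<^sup>2 = \<alpha>\<^sup>2 * ((norm b)\<^sup>2 + 2 * inner b e + (norm e)\<^sup>2)"
    proof -
      have 1: "(z - \<alpha> *\<^sub>R (b + e)) - z = - (\<alpha> *\<^sub>R (b + e))" by simp
      have 2: "(norm (b + e))\<^sup>2 = (norm b)\<^sup>2 + 2 * inner b e + (norm e)\<^sup>2"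
        by (simp add: power2_norm_eq_inner inner_add_left inner_add_right inner_commute[of e b])
      show ?thesis unfolding 1 norm_minus_cancel norm_scaleR power_mult_distrib 2 by simp
    qed
    finally show ?thesis by (simp add: algebra_simps)
  qed
  have i3: "- (\<alpha> * inner (G z) b) + \<alpha> * inner (G xb) b \<le> \<alpha>*L*c/2*((norm m)\<^sup>2 + (norm b)\<^sup>2)"
  proof -
    have "- inner (G z - G xb) b \<le> norm (G z - G xb) * norm b"
      using Cauchy_Schwarz_ineq2[of "G z - G xb" b] by (simp add: abs_le_iff)
    also have "\<dots> \<le> (L * norm (z - xb)) * norm b"
      by (intro mult_right_mono G_lip) auto
    also have "norm (z - xb) = c * norm m" using c0 by (simp add: z_def)
    also have "L * (c * norm m) * norm b \<le> L * c * (((norm m)\<^sup>2 + (norm b)\<^sup>2) / 2)"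
    proof -
      have "norm m * norm b \<le> ((norm m)\<^sup>2 + (norm b)\<^sup>2) / 2"
        using sum_squares_bound[of "norm m" "norm b"] by (simp add: power2_eq_square)
      thus ?thesis using L0 c0 by (simp add: mult.assoc mult_left_mono)
    qed
    finally have "- inner (G z - G xb) b \<le> L * c * (((norm m)\<^sup>2 + (norm b)\<^sup>2) / 2)" .
    hence "\<alpha> * (- inner (G z - G xb) b) \<le> \<alpha> * (L * c * (((norm m)\<^sup>2 + (norm b)\<^sup>2) / 2))"
      using alpha by (intro mult_left_mono) auto
    thus ?thesis by (simp add: inner_diff_left algebra_simps)
  qed
  have i4: "- (\<alpha> * inner (G xb) b) = \<alpha>/2 * (norm (G xb - b))\<^sup>2 - \<alpha>/2 * (norm (G xb))\<^sup>2 - \<alpha>/2 * (norm b)\<^sup>2"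
    by (simp add: power2_norm_eq_inner inner_diff_left inner_diff_right inner_commute[of b "G xb"] algebra_simps)
  have i5: "\<alpha>/2 * (norm (G xb - b))\<^sup>2 \<le> \<alpha>/2 * (L\<^sup>2/N*S)"
  proof -
    have "G xb - b = avg (\<lambda>i. gf i xb - gf i (xs i))" by (simp add: G_def b_def avg_diff)
    hence "(norm (G xb - b))\<^sup>2 \<le> avg (\<lambda>i. (norm (gf i xb - gf i (xs i)))\<^sup>2)"
      using norm_avg_sq by metis
    also have "\<dots> \<le> avg (\<lambda>i. L\<^sup>2 * (norm (xs i - xb))\<^sup>2)"
      unfolding avg_def real_scaleR_def
    proof (intro mult_left_mono sum_mono)
      fix i
      have "norm (gf i xb - gf i (xs i)) \<le> L * norm (xs i - xb)"
        using smooth[of i xb "xs i"] by (simp add: norm_minus_commute)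
      hence "(norm (gf i xb - gf i (xs i)))\<^sup>2 \<le> (L * norm (xs i - xb))\<^sup>2"
        by (intro power_mono) auto
      thus "(norm (gf i xb - gf i (xs i)))\<^sup>2 \<le> L\<^sup>2 * (norm (xs i - xb))\<^sup>2" by (simp add: power_mult_distrib)
    qed auto
    also have "\<dots> = L\<^sup>2/N*S" by (simp add: avg_def S_def N_def sum_distrib_left)
    finally show ?thesis using alpha by (intro mult_left_mono) auto
  qed
  have "fb (z - \<alpha> *\<^sub>R (b + e)) \<le> fb z + \<alpha>*L*c/2*((norm m)\<^sup>2 + (norm b)\<^sup>2) + (\<alpha>/2*(L\<^sup>2/N*S) - \<alpha>/2*(norm (G xb))\<^sup>2 - \<alpha>/2*(norm b)\<^sup>2)
      - \<alpha> * inner (G z) e + L/2*\<alpha>\<^sup>2*((norm b)\<^sup>2 + 2 * inner b e + (norm e)\<^sup>2)"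
    using d i3 i4 i5 by linarith
  also have "\<dots> = fb z + \<alpha>\<^sup>2 * L * \<beta> / (2 * (1 - \<beta>)) * (norm m)\<^sup>2 + \<alpha> * L\<^sup>2 / (2 * N) * S
      - \<alpha> / 2 * (1 - \<beta> * \<alpha> * L / (1 - \<beta>) - \<alpha> * L) * (norm b)\<^sup>2 - \<alpha> / 2 * (norm (G xb))\<^sup>2
      + (- \<alpha> * inner (G z) e + \<alpha>\<^sup>2 * L * inner b e + \<alpha>\<^sup>2 * L / 2 * (norm e)\<^sup>2)"
    unfolding c_def by (rule coef_eq[OF beta(2) N0])
  finally show ?thesis unfolding S_def N_def .
qed

end

context edm begin

lemma gf_cont: "continuous_on UNIV (gf i)"
  by (rule lipschitz_on_continuous_on[of L]) (rule lipschitz_onI, use smooth L_nonneg in \<open>auto simp: dist_norm\<close>)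

lemma gf_meas[measurable]: "gf i \<in> borel_measurable borel"
  by (rule borel_measurable_continuous_onI[OF gf_cont])

lemma G_meas[measurable]: "G \<in> borel_measurable borel"
  unfolding G_def avg_def by measurable

lemma f_cont: "continuous_on UNIV (f i)"
  using grad_f unfolding gderiv_def
  by (intro continuous_at_imp_continuous_on ballI) (metis has_derivative_continuous)

lemma fb_meas[measurable]: "fb \<in> borel_measurable borel"
proof -
  have [measurable]: "f i \<in> borel_measurable borel" for i by (rule borel_measurable_continuous_onI[OF f_cont])
  show ?thesis unfolding fb_def by measurable
qed

lemma gF_comp[measurable (raw)]:
  assumes "a \<in> N \<rightarrow>\<^sub>M borel" "b \<in> N \<rightarrow>\<^sub>M borel"
  shows "(\<lambda>w. gF i (a w) (b w)) \<in> N \<rightarrow>\<^sub>M borel"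
proof -
  have "(\<lambda>w. (a w, b w)) \<in> N \<rightarrow>\<^sub>M borel" using assms by (rule borel_measurable_Pair)
  from measurable_compose[OF this gF_meas[of i]] show ?thesis by simp
qed

lemma mix_meas:
  assumes "\<And>j. (\<lambda>w. v w j) \<in> N \<rightarrow>\<^sub>M borel"
  shows "(\<lambda>w. mix W (v w) k) \<in> N \<rightarrow>\<^sub>M (borel :: (real^'d) measure)"
  unfolding mix_def using assms by measurable

definition mstep :: "nat \<Rightarrow> ('n \<Rightarrow> real^'d) \<Rightarrow> ('n \<Rightarrow> real^'d) \<Rightarrow> ('n \<times> nat \<Rightarrow> real^'p) \<Rightarrow> 'n \<Rightarrow> real^'d" where
  "mstep t Xc Mp a = (\<lambda>i. \<beta> *\<^sub>R Mp i + (1 - \<beta>) *\<^sub>R gF i (Xc i) (a (i, t)))"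
definition xstep :: "('n \<Rightarrow> real^'d) \<Rightarrow> ('n \<Rightarrow> real^'d) \<Rightarrow> ('n \<Rightarrow> real^'d) \<Rightarrow> ('n \<Rightarrow> real^'d) \<Rightarrow> 'n \<Rightarrow> real^'d" where
  "xstep Xp Xc Mp Mc = mix W (\<lambda>j. 2 *\<^sub>R Xc j - Xp j - \<alpha> *\<^sub>R Mc j + \<alpha> *\<^sub>R Mp j)"

primrec stt :: "nat \<Rightarrow> ('n \<times> nat \<Rightarrow> real^'p) \<Rightarrow> ('n \<Rightarrow> real^'d) \<times> ('n \<Rightarrow> real^'d) \<times> ('n \<Rightarrow> real^'d)" where
  "stt 0 a = ((\<lambda>i. x0), xstep (\<lambda>i. x0) (\<lambda>i. x0) (\<lambda>i. 0) (mstep 0 (\<lambda>i. x0) (\<lambda>i. 0) a), mstep 0 (\<lambda>i. x0) (\<lambda>i. 0) a)"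
| "stt (Suc t) a = (fst (snd (stt t a)),
     xstep (fst (stt t a)) (fst (snd (stt t a))) (snd (snd (stt t a))) (mstep (Suc t) (fst (snd (stt t a))) (snd (snd (stt t a))) a),
     mstep (Suc t) (fst (snd (stt t a))) (snd (snd (stt t a))) a)"

definition xi_all :: "'a \<Rightarrow> 'n \<times> nat \<Rightarrow> real^'p" where
  "xi_all \<omega> = (\<lambda>ks. (\<lambda>(i, s). \<xi> i s) ks \<omega>)"

lemma xi_all_app[simp]: "xi_all \<omega> (k, s) = \<xi> k s \<omega>" by (simp add: xi_all_def)

lemma stt_rep: "stt t (xi_all \<omega>) = (X t \<omega>, X (Suc t) \<omega>, Mm t \<omega>)"
proof (induction t)
  case 0
  have m0: "mstep 0 (\<lambda>i. x0) (\<lambda>i. 0) (xi_all \<omega>) = Mm 0 \<omega>"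
    by (simp add: mstep_def iterD(1,2))
  show ?case
    by (simp add: m0 xstep_def iterD(1,4))
next
  case (Suc t)
  have m: "mstep (Suc t) (X (Suc t) \<omega>) (Mm t \<omega>) (xi_all \<omega>) = Mm (Suc t) \<omega>"
    by (simp add: mstep_def iterD(3))
  show ?case using Suc by (simp add: m xstep_def iterD(5))
qed

lemma stt_dep: "(\<And>k s. s \<le> t \<Longrightarrow> a (k, s) = a' (k, s)) \<Longrightarrow> stt t a = stt t a'"
proof (induction t)
  case 0 then show ?case by (simp add: mstep_def)
next
  case (Suc t)
  have "stt t a = stt t a'" using Suc.prems by (intro Suc.IH) auto
  then show ?case using Suc.prems by (simp add: mstep_def)
qed

abbreviation PU :: "('n \<times> nat \<Rightarrow> real^'p) measure" where
  "PU \<equiv> PiM UNIV (\<lambda>_. borel)"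

lemma comp_meas[measurable]: "(\<lambda>a. a ks) \<in> PU \<rightarrow>\<^sub>M borel"
  by (rule measurable_component_singleton) simp

lemma stt_meas:
  "(\<lambda>a. fst (stt t a) k) \<in> PU \<rightarrow>\<^sub>M borel \<and> (\<lambda>a. fst (snd (stt t a)) k) \<in> PU \<rightarrow>\<^sub>M borel
   \<and> (\<lambda>a. snd (snd (stt t a)) k) \<in> PU \<rightarrow>\<^sub>M borel"
proof (induction t arbitrary: k)
  case 0
  have m0[measurable]: "(\<lambda>a. mstep 0 (\<lambda>i. x0) (\<lambda>i. 0) a j) \<in> PU \<rightarrow>\<^sub>M borel" for j
    unfolding mstep_def by measurable
  have "(\<lambda>a. xstep (\<lambda>i. x0) (\<lambda>i. x0) (\<lambda>i. 0) (mstep 0 (\<lambda>i. x0) (\<lambda>i. 0) a) k) \<in> PU \<rightarrow>\<^sub>M borel"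
    unfolding xstep_def by (rule mix_meas) measurable
  then show ?case using m0 by simp
next
  case (Suc t)
  have [measurable]: "(\<lambda>a. fst (stt t a) j) \<in> PU \<rightarrow>\<^sub>M borel" "(\<lambda>a. fst (snd (stt t a)) j) \<in> PU \<rightarrow>\<^sub>M borel"
    "(\<lambda>a. snd (snd (stt t a)) j) \<in> PU \<rightarrow>\<^sub>M borel" for j using Suc by blast+
  have m1[measurable]: "(\<lambda>a. mstep (Suc t) (fst (snd (stt t a))) (snd (snd (stt t a))) a j) \<in> PU \<rightarrow>\<^sub>M borel" for j
    unfolding mstep_def by measurable
  have "(\<lambda>a. xstep (fst (stt t a)) (fst (snd (stt t a))) (snd (snd (stt t a))) (mstep (Suc t) (fst (snd (stt t a))) (snd (snd (stt t a))) a) k) \<in> PU \<rightarrow>\<^sub>M borel"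
    unfolding xstep_def by (rule mix_meas) measurable
  then show ?case using m1 Suc by simp
qed

lemma xi_all_meas[measurable]: "xi_all \<in> M \<rightarrow>\<^sub>M PU"
  unfolding xi_all_def
  by (rule measurable_PiM_single') (auto simp: \<xi>_meas split: prod.splits)

end

context edm begin

lemma filt_subalg: "subalgebra M (filt M \<xi> s)"
proof -
  let ?G = "{\<xi> i s' -` B \<inter> space M | i s' B. s' < s \<and> B \<in> sets borel}"
  have G: "?G \<subseteq> sets M" using \<xi>_meas by (auto intro: measurable_sets)
  have "sets (filt M \<xi> s) \<subseteq> sets M"
    unfolding filt_def sets_measure_of_conv
    using sets.sigma_sets_subset[OF G] G sets.top by auto
  moreover have "space (filt M \<xi> s) = space M"
    unfolding filt_def by (simp add: space_measure_of_conv)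
  ultimately show ?thesis unfolding subalgebra_def by simp
qed

lemma filt_sf: "sigma_finite_subalgebra M (filt M \<xi> s)"
  by (intro finite_measure_subalgebra_is_sigma_finite finite_measure_subalgebra.intro
      finite_measure_subalgebra_axioms.intro finite_measure_axioms filt_subalg)

lemma sq_int_norm:
  assumes "v \<in> borel_measurable M" "integrable M (\<lambda>\<omega>. (norm (v \<omega>))\<^sup>2)"
  shows "integrable M (\<lambda>\<omega>. norm (v \<omega>))"
proof (rule Bochner_Integration.integrable_bound)
  show "integrable M (\<lambda>\<omega>. 1 + (norm (v \<omega>))\<^sup>2)" using assms by simp
  show "(\<lambda>\<omega>. norm (v \<omega>)) \<in> borel_measurable M" using assms by measurable
  have "x \<le> 1 + x\<^sup>2" for x :: real
  proof -
    have "0 \<le> (x - 1/2)\<^sup>2" by simp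
    hence "0 \<le> x*x - x + 1/4" by (simp add: power2_eq_square algebra_simps)
    thus ?thesis by (simp add: power2_eq_square)
  qed
  then show "AE \<omega> in M. norm (norm (v \<omega>)) \<le> norm (1 + (norm (v \<omega>))\<^sup>2)" by auto
qed

lemma comp_int:
  assumes "(v :: 'a \<Rightarrow> real^'q::finite) \<in> borel_measurable M" "integrable M (\<lambda>\<omega>. norm (v \<omega>))"
  shows "integrable M (\<lambda>\<omega>. v \<omega> $ k)"
proof (rule Bochner_Integration.integrable_bound[OF assms(2)])
  show "(\<lambda>\<omega>. v \<omega> $ k) \<in> borel_measurable M"
    using measurable_compose[OF assms(1) borel_measurable_nth] .
qed (use component_le_norm_cart in auto)

lemma F2: "(\<integral>\<^sup>+\<omega>. ennreal ((norm (gF i x (\<xi> i s \<omega>) - gf i x))\<^sup>2) \<partial>M) \<le> ennreal (\<sigma>\<^sup>2)"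
proof -
  interpret S: sigma_finite_subalgebra M "filt M \<xi> s" by (rule filt_sf)
  define g where "g = (\<lambda>\<omega>. ennreal ((norm (gF i x (\<xi> i s \<omega>) - gf i x))\<^sup>2))"
  have gm[measurable]: "g \<in> borel_measurable M" unfolding g_def using \<xi>_meas by measurable
  have AE: "AE \<omega> in M. nn_cond_exp M (filt M \<xi> s) g \<omega> \<le> ennreal (\<sigma>\<^sup>2)"
    using variance[of "\<lambda>_. x" s i] unfolding g_def by simp
  have "(\<integral>\<^sup>+\<omega>. g \<omega> \<partial>M) = (\<integral>\<^sup>+\<omega>. 1 * g \<omega> \<partial>M)" by simp
  also have "\<dots> = (\<integral>\<^sup>+\<omega>. 1 * nn_cond_exp M (filt M \<xi> s) g \<omega> \<partial>M)"
    by (rule S.nn_cond_exp_intg[symmetric]) auto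
  also have "\<dots> \<le> (\<integral>\<^sup>+\<omega>. ennreal (\<sigma>\<^sup>2) \<partial>M)"
    using AE by (intro nn_integral_mono_AE) auto
  also have "\<dots> = ennreal (\<sigma>\<^sup>2)" by (simp add: emeasure_space_1)
  finally show ?thesis unfolding g_def .
qed

lemma F2_int: "integrable M (\<lambda>\<omega>. (norm (gF i x (\<xi> i s \<omega>) - gf i x))\<^sup>2)"
proof (rule integrableI_bounded)
  show "(\<lambda>\<omega>. (norm (gF i x (\<xi> i s \<omega>) - gf i x))\<^sup>2) \<in> borel_measurable M" using \<xi>_meas by measurable
  have "(\<integral>\<^sup>+\<omega>. ennreal (norm ((norm (gF i x (\<xi> i s \<omega>) - gf i x))\<^sup>2)) \<partial>M) \<le> ennreal (\<sigma>\<^sup>2)"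
    using F2 by simp
  also have "\<dots> < \<infinity>" by simp
  finally show "(\<integral>\<^sup>+\<omega>. ennreal (norm ((norm (gF i x (\<xi> i s \<omega>) - gf i x))\<^sup>2)) \<partial>M) < \<infinity>" .
qed

lemma F1: "integrable M (\<lambda>\<omega>. (gF i x (\<xi> i s \<omega>) - gf i x) $ k)"
  "(\<integral>\<omega>. (gF i x (\<xi> i s \<omega>) - gf i x) $ k \<partial>M) = 0"
proof -
  interpret S: sigma_finite_subalgebra M "filt M \<xi> s" by (rule filt_sf)
  have vm: "(\<lambda>\<omega>. gF i x (\<xi> i s \<omega>) - gf i x) \<in> borel_measurable M" using \<xi>_meas by measurable
  show I: "integrable M (\<lambda>\<omega>. (gF i x (\<xi> i s \<omega>) - gf i x) $ k)"
    by (rule comp_int[OF vm sq_int_norm[OF vm F2_int]])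
  have AE: "AE \<omega> in M. real_cond_exp M (filt M \<xi> s) (\<lambda>\<omega>. (gF i x (\<xi> i s \<omega>) - gf i x) $ k) \<omega> = 0"
    using unbiased[of "\<lambda>_. x" s i k] by simp
  have "(\<integral>\<omega>. (gF i x (\<xi> i s \<omega>) - gf i x) $ k \<partial>M) = (\<integral>\<omega>. real_cond_exp M (filt M \<xi> s) (\<lambda>\<omega>. (gF i x (\<xi> i s \<omega>) - gf i x) $ k) \<omega> \<partial>M)"
    by (rule S.real_cond_exp_int(2)[OF I, symmetric])
  also have "\<dots> = (\<integral>\<omega>. 0 \<partial>M)" using AE by (intro integral_cong_AE) auto
  finally show "(\<integral>\<omega>. (gF i x (\<xi> i s \<omega>) - gf i x) $ k \<partial>M) = 0" by simp
qed

definition Bv :: "'n \<Rightarrow> nat \<Rightarrow> 'a \<Rightarrow> 'n \<times> nat \<Rightarrow> real^'p" where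
  "Bv i t \<omega> = (xi_all \<omega>)((i, t) := undefined)"

definition Cv :: "'n \<Rightarrow> nat \<Rightarrow> 'a \<Rightarrow> 'n \<times> nat \<Rightarrow> real^'p" where
  "Cv i t \<omega> = (\<lambda>ks. if ks = (i, t) then \<xi> i t \<omega> else undefined)"

lemma indep_B: "indep_var PU (Bv i t) PU (Cv i t)"
proof -
  have ind: "indep_var (PiM (- {(i, t)}) (\<lambda>_. borel)) (\<lambda>\<omega>. restrict (\<lambda>ks. (\<lambda>(i, s). \<xi> i s) ks \<omega>) (- {(i, t)}))
      (PiM {(i, t)} (\<lambda>_. borel)) (\<lambda>\<omega>. restrict (\<lambda>ks. (\<lambda>(i, s). \<xi> i s) ks \<omega>) {(i, t)})"
    by (rule indep_var_restrict[OF \<xi>_indep]) auto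
  define Y1 :: "('n \<times> nat \<Rightarrow> real^'p) \<Rightarrow> ('n \<times> nat \<Rightarrow> real^'p)" where
    "Y1 = (\<lambda>a ks. if ks = (i, t) then undefined else a ks)"
  define Y2 :: "('n \<times> nat \<Rightarrow> real^'p) \<Rightarrow> ('n \<times> nat \<Rightarrow> real^'p)" where
    "Y2 = (\<lambda>a ks. if ks = (i, t) then a (i, t) else undefined)"
  have Y1m: "Y1 \<in> PiM (- {(i, t)}) (\<lambda>_. borel) \<rightarrow>\<^sub>M PU"
    unfolding Y1_def
  proof (rule measurable_PiM_single')
    fix ks :: "'n \<times> nat"
    show "(\<lambda>a. if ks = (i, t) then undefined else a ks) \<in> PiM (- {(i, t)}) (\<lambda>_. borel) \<rightarrow>\<^sub>M borel"
      by (cases "ks = (i, t)") (auto intro: measurable_component_singleton)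
  qed auto
  have Y2m: "Y2 \<in> PiM {(i, t)} (\<lambda>_. borel) \<rightarrow>\<^sub>M PU"
    unfolding Y2_def
  proof (rule measurable_PiM_single')
    fix ks :: "'n \<times> nat"
    show "(\<lambda>a. if ks = (i, t) then a (i, t) else undefined) \<in> PiM {(i, t)} (\<lambda>_. borel) \<rightarrow>\<^sub>M borel"
      by (cases "ks = (i, t)") (auto intro: measurable_component_singleton)
  qed auto
  have "indep_var PU (Y1 \<circ> (\<lambda>\<omega>. restrict (\<lambda>ks. (\<lambda>(i, s). \<xi> i s) ks \<omega>) (- {(i, t)})))
      PU (Y2 \<circ> (\<lambda>\<omega>. restrict (\<lambda>ks. (\<lambda>(i, s). \<xi> i s) ks \<omega>) {(i, t)}))"
    by (rule indep_var_compose[OF ind Y1m Y2m])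
  moreover have "Y1 \<circ> (\<lambda>\<omega>. restrict (\<lambda>ks. (\<lambda>(i, s). \<xi> i s) ks \<omega>) (- {(i, t)})) = Bv i t"
    by (auto simp: Y1_def Bv_def xi_all_def fun_eq_iff)
  moreover have "Y2 \<circ> (\<lambda>\<omega>. restrict (\<lambda>ks. (\<lambda>(i, s). \<xi> i s) ks \<omega>) {(i, t)}) = Cv i t"
    by (auto simp: Y2_def Cv_def fun_eq_iff)
  ultimately show ?thesis by simp
qed

lemma Bv_meas[measurable]: "Bv i t \<in> M \<rightarrow>\<^sub>M PU"
  using indep_var_rv1[OF indep_B] .
lemma Cv_meas[measurable]: "Cv i t \<in> M \<rightarrow>\<^sub>M PU"
  using indep_var_rv2[OF indep_B] .

lemma distr_B: "distr M PU (Bv i t) \<Otimes>\<^sub>M distr M PU (Cv i t) = distr M (PU \<Otimes>\<^sub>M PU) (\<lambda>\<omega>. (Bv i t \<omega>, Cv i t \<omega>))"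
  using indep_B[of i t] unfolding indep_var_distribution_eq by blast

end

context edm begin

lemma vec_nth_meas[measurable (raw)]: "a \<in> N \<rightarrow>\<^sub>M borel \<Longrightarrow> (\<lambda>x. (a x :: real^'q::finite) $ k) \<in> N \<rightarrow>\<^sub>M borel"
  using measurable_compose[OF _ borel_measurable_nth] .

lemma Bv_inv: "(\<forall>a c. y (a((i, t) := c)) = y a) \<Longrightarrow> y (Bv i t \<omega>) = y (xi_all \<omega>)"
  unfolding Bv_def by metis

lemma Cv_app[simp]: "Cv i t \<omega> (i, t) = \<xi> i t \<omega>" by (simp add: Cv_def)

lemma KV:
  assumes ym[measurable]: "y \<in> PU \<rightarrow>\<^sub>M borel" and yi: "\<forall>a c. y (a((i, t) := c)) = y a"
  shows "(\<integral>\<^sup>+\<omega>. ennreal ((norm (gF i (y (xi_all \<omega>)) (\<xi> i t \<omega>) - gf i (y (xi_all \<omega>))))\<^sup>2) \<partial>M) \<le> ennreal (\<sigma>\<^sup>2)"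
proof -
  let ?P = "distr M PU (Bv i t)" and ?Q = "distr M PU (Cv i t)"
  interpret P: prob_space ?P by (rule prob_space_distr) simp
  interpret Q: prob_space ?Q by (rule prob_space_distr) simp
  interpret PQ: pair_prob_space ?P ?Q ..
  define \<psi> where "\<psi> z = ennreal ((norm (gF i (y (fst z)) (snd z (i, t)) - gf i (y (fst z))))\<^sup>2)" for z
  have \<psi>m[measurable]: "\<psi> \<in> borel_measurable (PU \<Otimes>\<^sub>M PU)" unfolding \<psi>_def by measurable
  have inner: "(\<integral>\<^sup>+c. \<psi> (a, c) \<partial>?Q) \<le> ennreal (\<sigma>\<^sup>2)" for a
  proof -
    have "(\<integral>\<^sup>+c. \<psi> (a, c) \<partial>?Q) = (\<integral>\<^sup>+\<omega>. \<psi> (a, Cv i t \<omega>) \<partial>M)"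
      by (rule nn_integral_distr) (simp_all add: \<psi>_def)
    also have "\<dots> = (\<integral>\<^sup>+\<omega>. ennreal ((norm (gF i (y a) (\<xi> i t \<omega>) - gf i (y a)))\<^sup>2) \<partial>M)"
      by (simp add: \<psi>_def)
    also have "\<dots> \<le> ennreal (\<sigma>\<^sup>2)" by (rule F2)
    finally show ?thesis .
  qed
  have "(\<integral>\<^sup>+\<omega>. ennreal ((norm (gF i (y (xi_all \<omega>)) (\<xi> i t \<omega>) - gf i (y (xi_all \<omega>))))\<^sup>2) \<partial>M)
      = (\<integral>\<^sup>+\<omega>. \<psi> (Bv i t \<omega>, Cv i t \<omega>) \<partial>M)"
    by (simp add: \<psi>_def Bv_inv[OF yi])
  also have "\<dots> = (\<integral>\<^sup>+z. \<psi> z \<partial>distr M (PU \<Otimes>\<^sub>M PU) (\<lambda>\<omega>. (Bv i t \<omega>, Cv i t \<omega>)))"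
    by (rule nn_integral_distr[symmetric]) simp_all
  also have "\<dots> = (\<integral>\<^sup>+z. \<psi> z \<partial>(?P \<Otimes>\<^sub>M ?Q))" by (simp add: distr_B)
  also have "\<dots> = (\<integral>\<^sup>+a. \<integral>\<^sup>+c. \<psi> (a, c) \<partial>?Q \<partial>?P)"
    by (rule Q.nn_integral_fst[symmetric]) simp
  also have "\<dots> \<le> (\<integral>\<^sup>+a. ennreal (\<sigma>\<^sup>2) \<partial>?P)"
    by (intro nn_integral_mono inner)
  also have "\<dots> = ennreal (\<sigma>\<^sup>2)" using P.emeasure_space_1 by simp
  finally show ?thesis .
qed

lemma KV_int:
  assumes ym[measurable]: "y \<in> PU \<rightarrow>\<^sub>M borel" and yi: "\<forall>a c. y (a((i, t) := c)) = y a"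
  shows "integrable M (\<lambda>\<omega>. (norm (gF i (y (xi_all \<omega>)) (\<xi> i t \<omega>) - gf i (y (xi_all \<omega>))))\<^sup>2)"
proof (rule integrableI_bounded)
  show "(\<lambda>\<omega>. (norm (gF i (y (xi_all \<omega>)) (\<xi> i t \<omega>) - gf i (y (xi_all \<omega>))))\<^sup>2) \<in> borel_measurable M"
    using \<xi>_meas by measurable
  have "(\<integral>\<^sup>+\<omega>. ennreal (norm ((norm (gF i (y (xi_all \<omega>)) (\<xi> i t \<omega>) - gf i (y (xi_all \<omega>))))\<^sup>2)) \<partial>M) \<le> ennreal (\<sigma>\<^sup>2)"
    using KV[OF ym yi] by simp
  also have "\<dots> < \<infinity>" by simp
  finally show "(\<integral>\<^sup>+\<omega>. ennreal (norm ((norm (gF i (y (xi_all \<omega>)) (\<xi> i t \<omega>) - gf i (y (xi_all \<omega>))))\<^sup>2)) \<partial>M) < \<infinity>" .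
qed

lemma prod_bound: "\<bar>a * b\<bar> \<le> a\<^sup>2 + b\<^sup>2" for a b :: real
proof -
  have h1: "2 * \<bar>a\<bar> * \<bar>b\<bar> \<le> \<bar>a\<bar>\<^sup>2 + \<bar>b\<bar>\<^sup>2" by (rule sum_squares_bound)
  have h2: "0 \<le> \<bar>a\<bar> * \<bar>b\<bar>" by simp
  have "\<bar>a\<bar>\<^sup>2 + \<bar>b\<bar>\<^sup>2 = a\<^sup>2 + b\<^sup>2" by simp
  with h1 h2 have "\<bar>a\<bar> * \<bar>b\<bar> \<le> a\<^sup>2 + b\<^sup>2" by linarith
  thus ?thesis by (simp add: abs_mult)
qed

lemma comp_sq: "(x $ k)\<^sup>2 \<le> (norm (x :: real^'q::finite))\<^sup>2"
proof -
  have "\<bar>x $ k\<bar>\<^sup>2 \<le> (norm x)\<^sup>2" by (rule power_mono[OF component_le_norm_cart abs_ge_zero])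
  thus ?thesis by simp
qed

lemma KL:
  assumes ym[measurable]: "y \<in> PU \<rightarrow>\<^sub>M borel" and yi: "\<forall>a c. y (a((i, t) := c)) = y a"
    and hm[measurable]: "h \<in> PU \<rightarrow>\<^sub>M borel" and hi: "\<forall>a c. h (a((i, t) := c)) = h a"
    and hsq: "integrable M (\<lambda>\<omega>. (h (xi_all \<omega>))\<^sup>2)"
  shows "integrable M (\<lambda>\<omega>. h (xi_all \<omega>) * (gF i (y (xi_all \<omega>)) (\<xi> i t \<omega>) - gf i (y (xi_all \<omega>))) $ k)"
    and "(\<integral>\<omega>. h (xi_all \<omega>) * (gF i (y (xi_all \<omega>)) (\<xi> i t \<omega>) - gf i (y (xi_all \<omega>))) $ k \<partial>M) = 0"
proof -
  let ?P = "distr M PU (Bv i t)" and ?Q = "distr M PU (Cv i t)"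
  interpret P: prob_space ?P by (rule prob_space_distr) simp
  interpret Q: prob_space ?Q by (rule prob_space_distr) simp
  interpret PQ: pair_prob_space ?P ?Q ..
  define \<phi> where "\<phi> z = h (fst z) * (gF i (y (fst z)) (snd z (i, t)) - gf i (y (fst z))) $ k" for z
  have \<phi>m[measurable]: "\<phi> \<in> borel_measurable (PU \<Otimes>\<^sub>M PU)" unfolding \<phi>_def by measurable
  have eqv: "h (xi_all \<omega>) * (gF i (y (xi_all \<omega>)) (\<xi> i t \<omega>) - gf i (y (xi_all \<omega>))) $ k = \<phi> (Bv i t \<omega>, Cv i t \<omega>)" for \<omega>
    by (simp add: \<phi>_def Bv_inv[OF yi] Bv_inv[OF hi])
  show I: "integrable M (\<lambda>\<omega>. h (xi_all \<omega>) * (gF i (y (xi_all \<omega>)) (\<xi> i t \<omega>) - gf i (y (xi_all \<omega>))) $ k)"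
  proof (rule Bochner_Integration.integrable_bound)
    show "integrable M (\<lambda>\<omega>. (h (xi_all \<omega>))\<^sup>2 + (norm (gF i (y (xi_all \<omega>)) (\<xi> i t \<omega>) - gf i (y (xi_all \<omega>))))\<^sup>2)"
      using hsq KV_int[OF ym yi] by simp
    show "(\<lambda>\<omega>. h (xi_all \<omega>) * (gF i (y (xi_all \<omega>)) (\<xi> i t \<omega>) - gf i (y (xi_all \<omega>))) $ k) \<in> borel_measurable M"
      using \<xi>_meas by measurable
    show "AE \<omega> in M. norm (h (xi_all \<omega>) * (gF i (y (xi_all \<omega>)) (\<xi> i t \<omega>) - gf i (y (xi_all \<omega>))) $ k)
        \<le> norm ((h (xi_all \<omega>))\<^sup>2 + (norm (gF i (y (xi_all \<omega>)) (\<xi> i t \<omega>) - gf i (y (xi_all \<omega>))))\<^sup>2)"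
    proof (rule AE_I2)
      fix \<omega>
      let ?e = "gF i (y (xi_all \<omega>)) (\<xi> i t \<omega>) - gf i (y (xi_all \<omega>))"
      have "\<bar>h (xi_all \<omega>) * ?e $ k\<bar> \<le> (h (xi_all \<omega>))\<^sup>2 + (?e $ k)\<^sup>2" by (rule prod_bound)
      also have "(?e $ k)\<^sup>2 \<le> (norm ?e)\<^sup>2" by (rule comp_sq)
      finally show "norm (h (xi_all \<omega>) * ?e $ k) \<le> norm ((h (xi_all \<omega>))\<^sup>2 + (norm ?e)\<^sup>2)" by simp
    qed
  qed
  have pm: "(\<lambda>\<omega>. (Bv i t \<omega>, Cv i t \<omega>)) \<in> M \<rightarrow>\<^sub>M PU \<Otimes>\<^sub>M PU" by measurable
  have Ipq: "integrable (?P \<Otimes>\<^sub>M ?Q) \<phi>"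
    unfolding distr_B integrable_distr_eq[OF pm \<phi>m] using I unfolding eqv .
  have inner: "(\<integral>c. \<phi> (a, c) \<partial>?Q) = 0" for a
  proof -
    have "(\<integral>c. \<phi> (a, c) \<partial>?Q) = h a * (\<integral>c. (gF i (y a) (c (i, t)) - gf i (y a)) $ k \<partial>?Q)"
      unfolding \<phi>_def by simp
    also have "(\<integral>c. (gF i (y a) (c (i, t)) - gf i (y a)) $ k \<partial>?Q) = (\<integral>\<omega>. (gF i (y a) (Cv i t \<omega> (i, t)) - gf i (y a)) $ k \<partial>M)"
      by (rule integral_distr) simp_all
    also have "\<dots> = 0" using F1(2)[of i "y a" t k] by simp
    finally show ?thesis by simp
  qed
  have "(\<integral>\<omega>. h (xi_all \<omega>) * (gF i (y (xi_all \<omega>)) (\<xi> i t \<omega>) - gf i (y (xi_all \<omega>))) $ k \<partial>M)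
      = (\<integral>\<omega>. \<phi> (Bv i t \<omega>, Cv i t \<omega>) \<partial>M)" unfolding eqv ..
  also have "\<dots> = (\<integral>z. \<phi> z \<partial>distr M (PU \<Otimes>\<^sub>M PU) (\<lambda>\<omega>. (Bv i t \<omega>, Cv i t \<omega>)))"
    by (rule integral_distr[symmetric]) simp_all
  also have "\<dots> = (\<integral>z. \<phi> z \<partial>(?P \<Otimes>\<^sub>M ?Q))" by (simp add: distr_B)
  also have "\<dots> = (\<integral>a. \<integral>c. \<phi> (a, c) \<partial>?Q \<partial>?P)"
    by (rule PQ.integral_fst'[symmetric, OF Ipq])
  also have "\<dots> = 0" by (simp add: inner)
  finally show "(\<integral>\<omega>. h (xi_all \<omega>) * (gF i (y (xi_all \<omega>)) (\<xi> i t \<omega>) - gf i (y (xi_all \<omega>))) $ k \<partial>M) = 0" .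
qed

end

context edm begin

definition SI :: "('a \<Rightarrow> real^'d) \<Rightarrow> bool" where
  "SI v \<longleftrightarrow> v \<in> borel_measurable M \<and> integrable M (\<lambda>\<omega>. (norm (v \<omega>))\<^sup>2)"

lemma SI_meas: "SI v \<Longrightarrow> v \<in> borel_measurable M" by (simp add: SI_def)
lemma SI_int: "SI v \<Longrightarrow> integrable M (\<lambda>\<omega>. (norm (v \<omega>))\<^sup>2)" by (simp add: SI_def)

lemma SI_const: "SI (\<lambda>_. c)" by (simp add: SI_def)

lemma norm_add_sq: "(norm (u + v))\<^sup>2 \<le> 2 * (norm u)\<^sup>2 + 2 * (norm (v :: real^'d))\<^sup>2"
proof -
  have "(norm (u + v))\<^sup>2 \<le> (norm u + norm v)\<^sup>2" by (intro power_mono norm_triangle_ineq) auto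
  also have "\<dots> \<le> 2 * (norm u)\<^sup>2 + 2 * (norm v)\<^sup>2"
    using sum_squares_bound[of "norm u" "norm v"] by (simp add: power2_sum)
  finally show ?thesis .
qed

lemma SI_bound:
  assumes "u \<in> borel_measurable M" "SI w" "\<And>\<omega>. norm (u \<omega>) \<le> norm (w \<omega>)"
  shows "SI u"
  unfolding SI_def
proof
  show "u \<in> borel_measurable M" by fact
  show "integrable M (\<lambda>\<omega>. (norm (u \<omega>))\<^sup>2)"
  proof (rule Bochner_Integration.integrable_bound[OF SI_int[OF assms(2)]])
    show "(\<lambda>\<omega>. (norm (u \<omega>))\<^sup>2) \<in> borel_measurable M" using assms(1) by measurable
    show "AE \<omega> in M. norm ((norm (u \<omega>))\<^sup>2) \<le> norm ((norm (w \<omega>))\<^sup>2)"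
      using assms(3) by (auto intro!: power_mono)
  qed
qed

lemma SI_add: "SI u \<Longrightarrow> SI v \<Longrightarrow> SI (\<lambda>\<omega>. u \<omega> + v \<omega>)"
  unfolding SI_def
proof (intro conjI)
  assume u: "u \<in> borel_measurable M \<and> integrable M (\<lambda>\<omega>. (norm (u \<omega>))\<^sup>2)"
    and v: "v \<in> borel_measurable M \<and> integrable M (\<lambda>\<omega>. (norm (v \<omega>))\<^sup>2)"
  then show m: "(\<lambda>\<omega>. u \<omega> + v \<omega>) \<in> borel_measurable M" by (auto intro!: borel_measurable_add)
  show "integrable M (\<lambda>\<omega>. (norm (u \<omega> + v \<omega>))\<^sup>2)"
  proof (rule Bochner_Integration.integrable_bound)
    show "integrable M (\<lambda>\<omega>. 2 * (norm (u \<omega>))\<^sup>2 + 2 * (norm (v \<omega>))\<^sup>2)" using u v by simp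
    show "(\<lambda>\<omega>. (norm (u \<omega> + v \<omega>))\<^sup>2) \<in> borel_measurable M" using m by measurable
    show "AE \<omega> in M. norm ((norm (u \<omega> + v \<omega>))\<^sup>2) \<le> norm (2 * (norm (u \<omega>))\<^sup>2 + 2 * (norm (v \<omega>))\<^sup>2)"
      using norm_add_sq by auto
  qed
qed

lemma SI_scale: "SI v \<Longrightarrow> SI (\<lambda>\<omega>. c *\<^sub>R v \<omega>)"
  unfolding SI_def by (auto simp: power_mult_distrib)

lemma SI_diff: "SI u \<Longrightarrow> SI v \<Longrightarrow> SI (\<lambda>\<omega>. u \<omega> - v \<omega>)"
  using SI_add[of u "\<lambda>\<omega>. (-1) *\<^sub>R v \<omega>"] SI_scale[of v "-1"] by simp

lemma SI_sum: "finite I \<Longrightarrow> (\<And>i. i \<in> I \<Longrightarrow> SI (v i)) \<Longrightarrow> SI (\<lambda>\<omega>. \<Sum>i\<in>I. v i \<omega>)"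
proof (induction I rule: finite_induct)
  case empty then show ?case using SI_const[of 0] by simp
next
  case (insert x F) then show ?case using SI_add[of "v x" "\<lambda>\<omega>. \<Sum>i\<in>F. v i \<omega>"] by simp
qed

lemma SI_avg: "(\<And>i. SI (\<lambda>\<omega>. v \<omega> i)) \<Longrightarrow> SI (\<lambda>\<omega>. avg (v \<omega>))"
  unfolding avg_def by (intro SI_scale SI_sum) auto

lemma SI_mix: "(\<And>j. SI (\<lambda>\<omega>. v \<omega> j)) \<Longrightarrow> SI (\<lambda>\<omega>. mix W (v \<omega>) k)"
  unfolding mix_def by (intro SI_sum SI_scale) auto

lemma SI_lipf:
  assumes lip: "\<And>x y. norm (g x - g y) \<le> L * norm (x - y)" and gm[measurable]: "g \<in> borel_measurable borel"
    and v: "SI v"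
  shows "SI (\<lambda>\<omega>. g (v \<omega>))"
proof -
  have vm[measurable]: "v \<in> borel_measurable M" using v by (simp add: SI_def)
  have "SI (\<lambda>\<omega>. g x0 + (g (v \<omega>) - g x0))"
  proof (rule SI_add[OF SI_const SI_bound])
    show "(\<lambda>\<omega>. g (v \<omega>) - g x0) \<in> borel_measurable M" by measurable
    show "SI (\<lambda>\<omega>. L *\<^sub>R (v \<omega> - x0))" by (intro SI_scale SI_diff v SI_const)
    show "norm (g (v \<omega>) - g x0) \<le> norm (L *\<^sub>R (v \<omega> - x0))" for \<omega>
      using lip[of "v \<omega>" x0] L_nonneg by simp
  qed
  then show ?thesis by simp
qed

lemma SI_gf: "SI v \<Longrightarrow> SI (\<lambda>\<omega>. gf k (v \<omega>))"
  by (rule SI_lipf[OF smooth gf_meas])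
lemma SI_G: "SI v \<Longrightarrow> SI (\<lambda>\<omega>. G (v \<omega>))"
  by (rule SI_lipf[OF G_lip G_meas])

lemma SI_inner:
  assumes "SI u" "SI v" shows "integrable M (\<lambda>\<omega>. inner (u \<omega>) (v \<omega>))"
proof (rule Bochner_Integration.integrable_bound)
  show "integrable M (\<lambda>\<omega>. (norm (u \<omega>))\<^sup>2 + (norm (v \<omega>))\<^sup>2)" using assms by (simp add: SI_def)
  show "(\<lambda>\<omega>. inner (u \<omega>) (v \<omega>)) \<in> borel_measurable M" using assms unfolding SI_def by (auto intro!: borel_measurable_inner)
  show "AE \<omega> in M. norm (inner (u \<omega>) (v \<omega>)) \<le> norm ((norm (u \<omega>))\<^sup>2 + (norm (v \<omega>))\<^sup>2)"
  proof (rule AE_I2)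
    fix \<omega>
    have "\<bar>inner (u \<omega>) (v \<omega>)\<bar> \<le> norm (u \<omega>) * norm (v \<omega>)" by (rule Cauchy_Schwarz_ineq2)
    also have "\<dots> \<le> \<bar>norm (u \<omega>) * norm (v \<omega>)\<bar>" by simp
    also have "\<dots> \<le> (norm (u \<omega>))\<^sup>2 + (norm (v \<omega>))\<^sup>2" by (rule prod_bound)
    finally show "norm (inner (u \<omega>) (v \<omega>)) \<le> norm ((norm (u \<omega>))\<^sup>2 + (norm (v \<omega>))\<^sup>2)" by simp
  qed
qed

lemma SI_comp_sq: "SI v \<Longrightarrow> integrable M (\<lambda>\<omega>. (v \<omega> $ k)\<^sup>2)"
proof (rule Bochner_Integration.integrable_bound[OF SI_int])
  assume "SI v"
  then show "(\<lambda>\<omega>. (v \<omega> $ k)\<^sup>2) \<in> borel_measurable M" unfolding SI_def by (auto intro!: borel_measurable_power vec_nth_meas)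
  show "AE \<omega> in M. norm ((v \<omega> $ k)\<^sup>2) \<le> norm ((norm (v \<omega>))\<^sup>2)" using comp_sq by auto
qed

lemma X_rep: "X t \<omega> k = fst (stt t (xi_all \<omega>)) k" by (simp add: stt_rep)
lemma Mm_rep: "Mm t \<omega> k = snd (snd (stt t (xi_all \<omega>))) k" by (simp add: stt_rep)

lemma X_meas[measurable]: "(\<lambda>\<omega>. X t \<omega> k) \<in> borel_measurable M"
  unfolding X_rep using measurable_compose[OF xi_all_meas] stt_meas by blast
lemma Mm_meas[measurable]: "(\<lambda>\<omega>. Mm t \<omega> k) \<in> borel_measurable M"
  unfolding Mm_rep using measurable_compose[OF xi_all_meas] stt_meas by blast

lemma Xf_meas[measurable]: "(\<lambda>a. fst (stt t a) k) \<in> PU \<rightarrow>\<^sub>M borel" using stt_meas by blast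
lemma Mf_meas[measurable]: "(\<lambda>a. snd (snd (stt t a)) k) \<in> PU \<rightarrow>\<^sub>M borel" using stt_meas by blast

lemma stt_past: "(\<And>k s. s < t \<Longrightarrow> a (k, s) = a' (k, s)) \<Longrightarrow> fst (stt t a) = fst (stt t a')"
proof (cases t)
  case 0 then show ?thesis by simp
next
  case (Suc t')
  assume H: "\<And>k s. s < t \<Longrightarrow> a (k, s) = a' (k, s)"
  have "stt t' a = stt t' a'" using H Suc by (intro stt_dep) auto
  then show ?thesis using Suc by simp
qed

lemma Xf_inv: "\<forall>a c. fst (stt t (a((i, t) := c))) k = fst (stt t a) k"
proof (intro allI)
  fix a :: "'n \<times> nat \<Rightarrow> real^'p" and c
  have "fst (stt t (a((i, t) := c))) = fst (stt t a)" by (rule stt_past) auto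
  then show "fst (stt t (a((i, t) := c))) k = fst (stt t a) k" by simp
qed

lemma SI_gF:
  assumes "SI (\<lambda>\<omega>. X s \<omega> k)"
  shows "SI (\<lambda>\<omega>. gF k (X s \<omega> k) (\<xi> k s \<omega>))"
proof -
  have e: "SI (\<lambda>\<omega>. gF k (X s \<omega> k) (\<xi> k s \<omega>) - gf k (X s \<omega> k))"
    unfolding SI_def
  proof
    show "(\<lambda>\<omega>. gF k (X s \<omega> k) (\<xi> k s \<omega>) - gf k (X s \<omega> k)) \<in> borel_measurable M"
      using \<xi>_meas by measurable
    show "integrable M (\<lambda>\<omega>. (norm (gF k (X s \<omega> k) (\<xi> k s \<omega>) - gf k (X s \<omega> k)))\<^sup>2)"
      unfolding X_rep by (rule KV_int[OF Xf_meas Xf_inv])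
  qed
  have "SI (\<lambda>\<omega>. (gF k (X s \<omega> k) (\<xi> k s \<omega>) - gf k (X s \<omega> k)) + gf k (X s \<omega> k))"
    by (rule SI_add[OF e SI_gf[OF assms]])
  then show ?thesis by simp
qed

lemma SI_XM: "SI (\<lambda>\<omega>. X t \<omega> k) \<and> SI (\<lambda>\<omega>. X (Suc t) \<omega> k) \<and> SI (\<lambda>\<omega>. Mm t \<omega> k)"
proof (induction t arbitrary: k)
  case 0
  have X0: "SI (\<lambda>\<omega>. X 0 \<omega> j)" for j by (simp add: iterD(1) SI_const)
  have M0: "SI (\<lambda>\<omega>. Mm 0 \<omega> j)" for j
    unfolding iterD(2) by (intro SI_scale SI_gF X0)
  have X1: "SI (\<lambda>\<omega>. X (Suc 0) \<omega> k)"
    unfolding iterD(4) by (intro SI_mix SI_add SI_diff SI_scale X0 M0 SI_const)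
  show ?case using X0 M0 X1 by blast
next
  case (Suc t)
  have X1: "SI (\<lambda>\<omega>. X (Suc t) \<omega> j)" and X0: "SI (\<lambda>\<omega>. X t \<omega> j)" and M0: "SI (\<lambda>\<omega>. Mm t \<omega> j)" for j
    using Suc by blast+
  have M1: "SI (\<lambda>\<omega>. Mm (Suc t) \<omega> j)" for j
    unfolding iterD(3) by (intro SI_add SI_scale SI_gF X1 M0)
  have X2: "SI (\<lambda>\<omega>. X (Suc (Suc t)) \<omega> k)"
    unfolding iterD(5) by (intro SI_mix SI_add SI_diff SI_scale X0 X1 M0 M1)
  show ?case using X1 M1 X2 by blast
qed

end

context edm begin

definition ee :: "'n \<Rightarrow> nat \<Rightarrow> 'a \<Rightarrow> real^'d" where
  "ee i t \<omega> = gF i (X t \<omega> i) (\<xi> i t \<omega>) - gf i (X t \<omega> i)"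
definition ef :: "'n \<Rightarrow> nat \<Rightarrow> ('n \<times> nat \<Rightarrow> real^'p) \<Rightarrow> real^'d" where
  "ef i t a = gF i (fst (stt t a) i) (a (i, t)) - gf i (fst (stt t a) i)"

lemma ee_rep: "ee i t \<omega> = ef i t (xi_all \<omega>)"
  by (simp add: ee_def ef_def X_rep)

lemma ee_fun: "ee i t = (\<lambda>\<omega>. ef i t (xi_all \<omega>))" by (rule ext) (rule ee_rep)

lemma ef_meas[measurable]: "ef i t \<in> PU \<rightarrow>\<^sub>M borel"
  unfolding ef_def by measurable

lemma ef_inv: "j \<noteq> i \<Longrightarrow> \<forall>a c. ef j t (a((i, t) := c)) = ef j t a"
  unfolding ef_def using Xf_inv[of t i] by simp

lemma SI_X: "SI (\<lambda>\<omega>. X t \<omega> k)" using SI_XM by blast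
lemma SI_Mm: "SI (\<lambda>\<omega>. Mm t \<omega> k)" using SI_XM by blast

lemma SI_ee: "SI (ee i t)"
  unfolding ee_def by (intro SI_diff SI_gF SI_gf SI_X)

lemma ee_var: "(\<integral>\<omega>. (norm (ee i t \<omega>))\<^sup>2 \<partial>M) \<le> \<sigma>\<^sup>2"
proof -
  have I: "integrable M (\<lambda>\<omega>. (norm (ee i t \<omega>))\<^sup>2)" using SI_ee by (simp add: SI_def)
  have "ennreal (\<integral>\<omega>. (norm (ee i t \<omega>))\<^sup>2 \<partial>M) = (\<integral>\<^sup>+\<omega>. ennreal ((norm (ee i t \<omega>))\<^sup>2) \<partial>M)"
    by (rule nn_integral_eq_integral[OF I, symmetric]) simp
  also have "\<dots> \<le> ennreal (\<sigma>\<^sup>2)"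
    unfolding ee_def X_rep by (rule KV[OF Xf_meas Xf_inv])
  finally show ?thesis by (subst (asm) ennreal_le_iff) auto
qed

lemma inner_vec_sum: "inner (x :: real^'d) y = (\<Sum>k\<in>UNIV. x $ k * y $ k)"
  by (simp add: inner_vec_def)

lemma I4:
  assumes vm[measurable]: "v \<in> PU \<rightarrow>\<^sub>M borel" and vi: "\<forall>a c. v (a((i, t) := c)) = v a"
    and vs: "SI (\<lambda>\<omega>. v (xi_all \<omega>))"
  shows "integrable M (\<lambda>\<omega>. inner (v (xi_all \<omega>)) (ee i t \<omega>))"
    "(\<integral>\<omega>. inner (v (xi_all \<omega>)) (ee i t \<omega>) \<partial>M) = 0"
proof -
  have hk: "integrable M (\<lambda>\<omega>. (v (xi_all \<omega>)) $ k * (ee i t \<omega>) $ k) \<and> (\<integral>\<omega>. (v (xi_all \<omega>)) $ k * (ee i t \<omega>) $ k \<partial>M) = 0" for k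
  proof -
    have hm: "(\<lambda>a. v a $ k) \<in> PU \<rightarrow>\<^sub>M borel" by measurable
    have hi: "\<forall>a c. v (a((i, t) := c)) $ k = v a $ k" using vi by simp
    have hs: "integrable M (\<lambda>\<omega>. (v (xi_all \<omega>) $ k)\<^sup>2)" by (rule SI_comp_sq[OF vs])
    show ?thesis unfolding ee_def X_rep
      using KL[OF Xf_meas Xf_inv hm hi hs, where k=k] by simp
  qed
  have eq: "inner (v (xi_all \<omega>)) (ee i t \<omega>) = (\<Sum>k\<in>UNIV. (v (xi_all \<omega>)) $ k * (ee i t \<omega>) $ k)" for \<omega>
    by (rule inner_vec_sum)
  show "integrable M (\<lambda>\<omega>. inner (v (xi_all \<omega>)) (ee i t \<omega>))"
    unfolding eq using hk by (intro Bochner_Integration.integrable_sum) auto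
  show "(\<integral>\<omega>. inner (v (xi_all \<omega>)) (ee i t \<omega>) \<partial>M) = 0"
    unfolding eq using hk by (subst Bochner_Integration.integral_sum) auto
qed

definition ebar :: "nat \<Rightarrow> 'a \<Rightarrow> real^'d" where "ebar t \<omega> = avg (\<lambda>i. ee i t \<omega>)"

lemma I5:
  assumes vm[measurable]: "v \<in> PU \<rightarrow>\<^sub>M borel" and vi: "\<And>i. \<forall>a c. v (a((i, t) := c)) = v a"
    and vs: "SI (\<lambda>\<omega>. v (xi_all \<omega>))"
  shows "integrable M (\<lambda>\<omega>. inner (v (xi_all \<omega>)) (ebar t \<omega>))"
    "(\<integral>\<omega>. inner (v (xi_all \<omega>)) (ebar t \<omega>) \<partial>M) = 0"
proof -
  have eq: "inner (v (xi_all \<omega>)) (ebar t \<omega>) = (1 / real CARD('n)) * (\<Sum>i\<in>UNIV. inner (v (xi_all \<omega>)) (ee i t \<omega>))" for \<omega>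
    by (simp add: ebar_def avg_def inner_sum_right)
  show "integrable M (\<lambda>\<omega>. inner (v (xi_all \<omega>)) (ebar t \<omega>))"
    unfolding eq using I4[OF vm vi vs] by (intro integrable_mult_right Bochner_Integration.integrable_sum) auto
  show "(\<integral>\<omega>. inner (v (xi_all \<omega>)) (ebar t \<omega>) \<partial>M) = 0"
    unfolding eq integral_mult_right_zero
    by (subst Bochner_Integration.integral_sum) (use I4[OF vm vi vs] in auto)
qed

lemma norm_avg_expand: "(norm (avg u))\<^sup>2 = (1 / real CARD('n))\<^sup>2 * (\<Sum>i\<in>UNIV. \<Sum>j\<in>UNIV. inner (u i) (u j))"
  for u :: "'n \<Rightarrow> real^'d"
proof -
  have "(norm (avg u))\<^sup>2 = inner (avg u) (avg u)" by (rule power2_norm_eq_inner)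
  also have "\<dots> = (1 / real CARD('n)) * (1 / real CARD('n)) * inner (\<Sum>i\<in>UNIV. u i) (\<Sum>j\<in>UNIV. u j)"
    unfolding avg_def inner_scaleR_left inner_scaleR_right by simp
  also have "inner (\<Sum>i\<in>UNIV. u i) (\<Sum>j\<in>UNIV. u j) = (\<Sum>i\<in>UNIV. \<Sum>j\<in>UNIV. inner (u i) (u j))"
    by (simp add: inner_sum_left inner_sum_right) (rule sum.swap)
  finally show ?thesis by (simp add: power2_eq_square)
qed

lemma SI_ebar: "SI (ebar t)"
  unfolding ebar_def by (intro SI_avg SI_ee)

lemma I6: "(\<integral>\<omega>. (norm (ebar t \<omega>))\<^sup>2 \<partial>M) \<le> \<sigma>\<^sup>2 / real CARD('n)"
proof -
  have II: "integrable M (\<lambda>\<omega>. inner (ee i t \<omega>) (ee j t \<omega>))" for i j by (intro SI_inner SI_ee)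
  have cross: "(\<integral>\<omega>. inner (ee i t \<omega>) (ee j t \<omega>) \<partial>M) = (if j = i then (\<integral>\<omega>. (norm (ee i t \<omega>))\<^sup>2 \<partial>M) else 0)" for i j
  proof (cases "j = i")
    case True then show ?thesis by (simp add: power2_norm_eq_inner)
  next
    case False
    have "(\<integral>\<omega>. inner (ee i t \<omega>) (ee j t \<omega>) \<partial>M) = (\<integral>\<omega>. inner (ef j t (xi_all \<omega>)) (ee i t \<omega>) \<partial>M)"
      by (simp add: ee_rep[of j] inner_commute)
    also have "\<dots> = 0"
      by (rule I4(2)[OF ef_meas ef_inv[OF False]]) (use SI_ee[of j t] in \<open>simp add: ee_fun\<close>)
    finally show ?thesis using False by simp
  qed
  have "(\<integral>\<omega>. (norm (ebar t \<omega>))\<^sup>2 \<partial>M) = (\<integral>\<omega>. (1 / real CARD('n))\<^sup>2 * (\<Sum>i\<in>UNIV. \<Sum>j\<in>UNIV. inner (ee i t \<omega>) (ee j t \<omega>)) \<partial>M)"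
    unfolding ebar_def norm_avg_expand ..
  also have "\<dots> = (1 / real CARD('n))\<^sup>2 * (\<Sum>i\<in>UNIV. \<Sum>j\<in>UNIV. (\<integral>\<omega>. inner (ee i t \<omega>) (ee j t \<omega>) \<partial>M))"
    using II by (simp add: Bochner_Integration.integral_sum Bochner_Integration.integrable_sum)
  also have "\<dots> = (1 / real CARD('n))\<^sup>2 * (\<Sum>i\<in>UNIV. (\<integral>\<omega>. (norm (ee i t \<omega>))\<^sup>2 \<partial>M))"
    by (simp add: cross)
  also have "\<dots> \<le> (1 / real CARD('n))\<^sup>2 * (\<Sum>i\<in>(UNIV::'n set). \<sigma>\<^sup>2)"
    by (intro mult_left_mono sum_mono ee_var) auto
  also have "\<dots> = \<sigma>\<^sup>2 / real CARD('n)"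
    by (simp add: power2_eq_square)
  finally show ?thesis .
qed

end

context edm begin

lemma fb_bound: "\<exists>K. \<forall>v. \<bar>fb v\<bar> \<le> K * (1 + (norm v)\<^sup>2)"
proof -
  obtain bl where bl: "\<And>i x. bl i \<le> f i x" using bdd_below by metis
  define lb where "lb = (1 / real CARD('n)) * (\<Sum>i\<in>UNIV. bl i)"
  have low: "lb \<le> fb v" for v
    unfolding lb_def fb_def by (intro mult_left_mono sum_mono bl) auto
  define K1 where "K1 = \<bar>fb x0\<bar> + norm (G x0) * (1 + norm x0) + L * (norm x0)\<^sup>2 + norm (G x0) + L"
  have up: "fb v \<le> K1 * (1 + (norm v)\<^sup>2)" for v
  proof -
    have L0: "0 \<le> L" by (rule L_nonneg)
    have n1: "norm (v - x0) \<le> 1 + (norm v)\<^sup>2 + norm x0"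
    proof -
      have "norm v \<le> 1 + (norm v)\<^sup>2"
      proof -
        have "0 \<le> (norm v - 1/2)\<^sup>2" by simp
        hence "0 \<le> norm v * norm v - norm v + 1/4" by (simp add: power2_eq_square algebra_simps)
        thus ?thesis by (simp add: power2_eq_square)
      qed
      moreover have "norm (v - x0) \<le> norm v + norm x0" by (rule norm_triangle_ineq4)
      ultimately show ?thesis by linarith
    qed
    have n2: "(norm (v - x0))\<^sup>2 \<le> 2 * (norm v)\<^sup>2 + 2 * (norm x0)\<^sup>2"
      using norm_add_sq[of v "- x0"] by simp
    have "fb v \<le> fb x0 + inner (G x0) (v - x0) + L / 2 * (norm (v - x0))\<^sup>2" by (rule fb_descent)
    also have "inner (G x0) (v - x0) \<le> norm (G x0) * norm (v - x0)" by (rule norm_cauchy_schwarz)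
    also have "norm (G x0) * norm (v - x0) \<le> norm (G x0) * (1 + (norm v)\<^sup>2 + norm x0)"
      by (intro mult_left_mono n1) auto
    also have "L / 2 * (norm (v - x0))\<^sup>2 \<le> L / 2 * (2 * (norm v)\<^sup>2 + 2 * (norm x0)\<^sup>2)"
      by (intro mult_left_mono n2) (use L0 in auto)
    finally have "fb v \<le> fb x0 + norm (G x0) * (1 + (norm v)\<^sup>2 + norm x0) + L / 2 * (2 * (norm v)\<^sup>2 + 2 * (norm x0)\<^sup>2)"
      by simp
    also have "\<dots> = fb x0 + norm (G x0) * (1 + norm x0) + L * (norm x0)\<^sup>2 + (norm (G x0) + L) * (norm v)\<^sup>2"
      by (simp add: algebra_simps)
    also have "\<dots> \<le> (\<bar>fb x0\<bar> + norm (G x0) * (1 + norm x0) + L * (norm x0)\<^sup>2) * 1 + (norm (G x0) + L) * (norm v)\<^sup>2"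
      by simp
    also have "\<dots> \<le> K1 * (1 + (norm v)\<^sup>2)"
    proof -
      have a: "0 \<le> \<bar>fb x0\<bar> + norm (G x0) * (1 + norm x0) + L * (norm x0)\<^sup>2" using L0 by simp
      have b: "0 \<le> norm (G x0) + L" using L0 by simp
      have "(\<bar>fb x0\<bar> + norm (G x0) * (1 + norm x0) + L * (norm x0)\<^sup>2) * (norm v)\<^sup>2 \<ge> 0" using a by simp
      moreover have "(norm (G x0) + L) * 1 \<ge> 0" using b by simp
      ultimately show ?thesis unfolding K1_def by (simp add: algebra_simps)
    qed
    finally show ?thesis .
  qed
  have "\<bar>fb v\<bar> \<le> (K1 + \<bar>lb\<bar>) * (1 + (norm v)\<^sup>2)" for v
  proof -
    have p: "1 \<le> 1 + (norm v)\<^sup>2" by simp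
    have K10: "0 \<le> K1" unfolding K1_def using L_nonneg by simp
    have "-\<bar>lb\<bar> * (1 + (norm v)\<^sup>2) \<le> -\<bar>lb\<bar>" using p by (simp add: mult_le_cancel_left1)
    hence "- ((K1 + \<bar>lb\<bar>) * (1 + (norm v)\<^sup>2)) \<le> fb v"
      using low[of v] K10 by (smt (verit) mult_nonneg_nonneg p zero_le_power2 distrib_right)
    moreover have "fb v \<le> (K1 + \<bar>lb\<bar>) * (1 + (norm v)\<^sup>2)"
      using up[of v] by (smt (verit) mult_nonneg_nonneg zero_le_power2 distrib_right abs_ge_zero)
    ultimately show ?thesis by linarith
  qed
  then show ?thesis by blast
qed

lemma SI_fb: "SI Z \<Longrightarrow> integrable M (\<lambda>\<omega>. fb (Z \<omega>))"
proof -
  assume Z: "SI Z"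
  obtain K where K: "\<And>v. \<bar>fb v\<bar> \<le> K * (1 + (norm v)\<^sup>2)" using fb_bound by blast
  have Zm[measurable]: "Z \<in> borel_measurable M" using Z by (simp add: SI_def)
  show ?thesis
  proof (rule Bochner_Integration.integrable_bound)
    show "integrable M (\<lambda>\<omega>. K * (1 + (norm (Z \<omega>))\<^sup>2))" using Z by (simp add: SI_def)
    show "(\<lambda>\<omega>. fb (Z \<omega>)) \<in> borel_measurable M" by measurable
    show "AE \<omega> in M. norm (fb (Z \<omega>)) \<le> norm (K * (1 + (norm (Z \<omega>))\<^sup>2))"
      using K by (auto intro: order_trans[OF _ abs_ge_self])
  qed
qed

end

context edm begin

definition zf :: "nat \<Rightarrow> ('n \<times> nat \<Rightarrow> real^'p) \<Rightarrow> real^'d" where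
  "zf t a = avg (fst (stt t a)) - (\<alpha> * \<beta> / (1 - \<beta>)) *\<^sub>R (if t = 0 then 0 else avg (snd (snd (stt (t - 1) a))))"
definition bf :: "nat \<Rightarrow> ('n \<times> nat \<Rightarrow> real^'p) \<Rightarrow> real^'d" where
  "bf t a = avg (\<lambda>i. gf i (fst (stt t a) i))"

lemma zseq_rep: "zseq \<beta> X t \<omega> = zf t (xi_all \<omega>)"
  unfolding z_x zf_def mbar_prev_def by (simp add: stt_rep)

lemma bb_rep: "avg (\<lambda>i. gf i (X t \<omega> i)) = bf t (xi_all \<omega>)"
  unfolding bf_def by (simp add: stt_rep)

lemma avgXf_meas[measurable]: "(\<lambda>a. avg (fst (stt t a))) \<in> PU \<rightarrow>\<^sub>M borel"
  unfolding avg_def by measurable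
lemma avgMf_meas[measurable]: "(\<lambda>a. avg (snd (snd (stt t a)))) \<in> PU \<rightarrow>\<^sub>M borel"
  unfolding avg_def by measurable

lemma zf_meas[measurable]: "zf t \<in> PU \<rightarrow>\<^sub>M borel"
proof (cases "t = 0")
  case True
  then have eq: "zf t = (\<lambda>a. avg (fst (stt t a)) - (\<alpha> * \<beta> / (1 - \<beta>)) *\<^sub>R (0::real^'d))"
    by (simp add: zf_def[abs_def])
  show ?thesis unfolding eq by measurable
next
  case False
  then have eq: "zf t = (\<lambda>a. avg (fst (stt t a)) - (\<alpha> * \<beta> / (1 - \<beta>)) *\<^sub>R avg (snd (snd (stt (t - 1) a))))"
    by (simp add: zf_def[abs_def])
  show ?thesis unfolding eq by measurable
qed

lemma bf_meas[measurable]: "bf t \<in> PU \<rightarrow>\<^sub>M borel"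
  unfolding bf_def avg_def by measurable

lemma zf_inv: "\<forall>a c. zf t (a((i, t) := c)) = zf t a"
proof (intro allI)
  fix a :: "'n \<times> nat \<Rightarrow> real^'p" and c
  have 1: "fst (stt t (a((i, t) := c))) = fst (stt t a)" by (rule stt_past) auto
  have 2: "stt (t - Suc 0) (a((i, t) := c)) = stt (t - Suc 0) a" if "t \<noteq> 0"
    using that by (intro stt_dep) auto
  show "zf t (a((i, t) := c)) = zf t a"
    unfolding zf_def 1 by (cases "t = 0") (simp_all add: 2)
qed

lemma bf_inv: "\<forall>a c. bf t (a((i, t) := c)) = bf t a"
proof (intro allI)
  fix a :: "'n \<times> nat \<Rightarrow> real^'p" and c
  have 1: "fst (stt t (a((i, t) := c))) = fst (stt t a)" by (rule stt_past) auto
  show "bf t (a((i, t) := c)) = bf t a" unfolding bf_def 1 ..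
qed

lemma SI_mbar: "SI (mbar_prev Mm t)"
proof (cases t)
  case 0 then show ?thesis using SI_const[of 0] by (simp add: mbar_prev_def[abs_def])
next
  case (Suc t')
  have "SI (\<lambda>\<omega>. avg (Mm t' \<omega>))" by (intro SI_avg SI_Mm)
  then show ?thesis using Suc by (simp add: mbar_prev_def[abs_def])
qed

lemma SI_zseq: "SI (zseq \<beta> X t)"
proof -
  have "SI (\<lambda>\<omega>. avg (X t \<omega>) - (\<alpha> * \<beta> / (1 - \<beta>)) *\<^sub>R mbar_prev Mm t \<omega>)"
    by (intro SI_diff SI_avg SI_X SI_scale SI_mbar)
  then show ?thesis by (simp add: z_x[abs_def])
qed

lemma gbar_split: "gbar t \<omega> = avg (\<lambda>i. gf i (X t \<omega> i)) + ebar t \<omega>"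
  unfolding gbar_def ebar_def ee_def by (simp add: avg_add[symmetric])

lemma main:
  "(\<integral>\<omega>. fb (zseq \<beta> X (Suc t) \<omega>) \<partial>M)
    \<le> (\<integral>\<omega>. fb (zseq \<beta> X t \<omega>) \<partial>M)
     + \<alpha>\<^sup>2 * L * \<beta> / (2 * (1 - \<beta>)) * (\<integral>\<omega>. (norm (mbar_prev Mm t \<omega>))\<^sup>2 \<partial>M)
     + \<alpha> * L\<^sup>2 / (2 * real CARD('n))
         * (\<integral>\<omega>. (\<Sum>i\<in>UNIV. (norm (X t \<omega> i - avg (X t \<omega>)))\<^sup>2) \<partial>M)
     + \<alpha>\<^sup>2 * L * \<sigma>\<^sup>2 / (2 * real CARD('n))
     - \<alpha> / 2 * (1 - \<beta> * \<alpha> * L / (1 - \<beta>) - \<alpha> * L)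
         * (\<integral>\<omega>. (norm (avg (\<lambda>i. gf i (X t \<omega> i))))\<^sup>2 \<partial>M)
     - \<alpha> / 2 * (\<integral>\<omega>. (norm (avg (\<lambda>i. gf i (avg (X t \<omega>)))))\<^sup>2 \<partial>M)"
proof -
  define c1 where "c1 = \<alpha>\<^sup>2 * L * \<beta> / (2 * (1 - \<beta>))"
  define c2 where "c2 = \<alpha> * L\<^sup>2 / (2 * real CARD('n))"
  define c3 where "c3 = \<alpha> / 2 * (1 - \<beta> * \<alpha> * L / (1 - \<beta>) - \<alpha> * L)"
  define m where "m = mbar_prev Mm t"
  define b where "b = (\<lambda>\<omega>. avg (\<lambda>i. gf i (X t \<omega> i)))"
  define Z where "Z = zseq \<beta> X t"
  define S where "S = (\<lambda>\<omega>. \<Sum>i\<in>UNIV. (norm (X t \<omega> i - avg (X t \<omega>)))\<^sup>2)"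
  define Gx where "Gx = (\<lambda>\<omega>. G (avg (X t \<omega>)))"
  define R where "R = (\<lambda>\<omega>. fb (Z \<omega>) + c1 * (norm (m \<omega>))\<^sup>2 + c2 * S \<omega> - c3 * (norm (b \<omega>))\<^sup>2
      - \<alpha> / 2 * (norm (Gx \<omega>))\<^sup>2
      + (- \<alpha> * inner (G (Z \<omega>)) (ebar t \<omega>) + \<alpha>\<^sup>2 * L * inner (b \<omega>) (ebar t \<omega>) + \<alpha>\<^sup>2 * L / 2 * (norm (ebar t \<omega>))\<^sup>2))"
  have pw: "fb (zseq \<beta> X (Suc t) \<omega>) \<le> R \<omega>" for \<omega>
  proof -
    have zs: "zseq \<beta> X (Suc t) \<omega> = (avg (X t \<omega>) - (\<alpha> * \<beta> / (1 - \<beta>)) *\<^sub>R m \<omega>) - \<alpha> *\<^sub>R (b \<omega> + ebar t \<omega>)"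
      unfolding z_step gbar_split unfolding z_x m_def b_def ..
    have zz: "Z \<omega> = avg (X t \<omega>) - (\<alpha> * \<beta> / (1 - \<beta>)) *\<^sub>R m \<omega>" unfolding Z_def m_def by (rule z_x)
    show ?thesis
      unfolding zs R_def zz c1_def c2_def c3_def S_def Gx_def b_def
      using pointwise[of "X t \<omega>" "m \<omega>" "ebar t \<omega>"] by simp
  qed
  have SZ: "SI Z" unfolding Z_def by (rule SI_zseq)
  have Sb: "SI b" unfolding b_def by (intro SI_avg SI_gf SI_X)
  have iZ': "integrable M (\<lambda>\<omega>. fb (zseq \<beta> X (Suc t) \<omega>))" by (rule SI_fb[OF SI_zseq])
  have iZ: "integrable M (\<lambda>\<omega>. fb (Z \<omega>))" by (rule SI_fb[OF SZ])
  have im: "integrable M (\<lambda>\<omega>. (norm (m \<omega>))\<^sup>2)" unfolding m_def by (rule SI_int[OF SI_mbar])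
  have iS: "integrable M S" unfolding S_def
    by (intro Bochner_Integration.integrable_sum SI_int SI_diff SI_X SI_avg)
  have ib: "integrable M (\<lambda>\<omega>. (norm (b \<omega>))\<^sup>2)" by (rule SI_int[OF Sb])
  have iG: "integrable M (\<lambda>\<omega>. (norm (Gx \<omega>))\<^sup>2)" unfolding Gx_def by (intro SI_int SI_G SI_avg SI_X)
  have vz: "SI (\<lambda>\<omega>. G (zf t (xi_all \<omega>)))" using SI_G[OF SZ] by (simp add: Z_def zseq_rep)
  have vb: "SI (\<lambda>\<omega>. bf t (xi_all \<omega>))" using Sb by (simp add: b_def bb_rep)
  have B1: "integrable M (\<lambda>\<omega>. inner (G (Z \<omega>)) (ebar t \<omega>))" "(\<integral>\<omega>. inner (G (Z \<omega>)) (ebar t \<omega>) \<partial>M) = 0"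
    using I5[of "\<lambda>a. G (zf t a)" t, OF _ _ vz] zf_inv[of t] by (simp_all add: Z_def zseq_rep)
  have B2: "integrable M (\<lambda>\<omega>. inner (b \<omega>) (ebar t \<omega>))" "(\<integral>\<omega>. inner (b \<omega>) (ebar t \<omega>) \<partial>M) = 0"
    using I5[of "bf t" t, OF _ _ vb] bf_inv[of t] by (simp_all add: b_def bb_rep)
  have B3: "integrable M (\<lambda>\<omega>. (norm (ebar t \<omega>))\<^sup>2)" by (rule SI_int[OF SI_ebar])
  have B3v: "(\<integral>\<omega>. (norm (ebar t \<omega>))\<^sup>2 \<partial>M) \<le> \<sigma>\<^sup>2 / real CARD('n)" by (rule I6)
  have iR: "integrable M R" unfolding R_def using iZ im iS ib iG B1(1) B2(1) B3 by simp
  have "(\<integral>\<omega>. fb (zseq \<beta> X (Suc t) \<omega>) \<partial>M) \<le> (\<integral>\<omega>. R \<omega> \<partial>M)"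
    by (rule integral_mono[OF iZ' iR pw])
  also have "(\<integral>\<omega>. R \<omega> \<partial>M) = (\<integral>\<omega>. fb (Z \<omega>) \<partial>M) + c1 * (\<integral>\<omega>. (norm (m \<omega>))\<^sup>2 \<partial>M) + c2 * (\<integral>\<omega>. S \<omega> \<partial>M)
      - c3 * (\<integral>\<omega>. (norm (b \<omega>))\<^sup>2 \<partial>M) - \<alpha> / 2 * (\<integral>\<omega>. (norm (Gx \<omega>))\<^sup>2 \<partial>M)
      + (- \<alpha> * (\<integral>\<omega>. inner (G (Z \<omega>)) (ebar t \<omega>) \<partial>M) + \<alpha>\<^sup>2 * L * (\<integral>\<omega>. inner (b \<omega>) (ebar t \<omega>) \<partial>M)
         + \<alpha>\<^sup>2 * L / 2 * (\<integral>\<omega>. (norm (ebar t \<omega>))\<^sup>2 \<partial>M))"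
    unfolding R_def using iZ im iS ib iG B1(1) B2(1) B3 by simp
  also have "\<alpha>\<^sup>2 * L / 2 * (\<integral>\<omega>. (norm (ebar t \<omega>))\<^sup>2 \<partial>M) \<le> \<alpha>\<^sup>2 * L / 2 * (\<sigma>\<^sup>2 / real CARD('n))"
    using L_nonneg B3v by (intro mult_left_mono) auto
  finally have F: "(\<integral>\<omega>. fb (zseq \<beta> X (Suc t) \<omega>) \<partial>M) \<le> (\<integral>\<omega>. fb (Z \<omega>) \<partial>M) + c1 * (\<integral>\<omega>. (norm (m \<omega>))\<^sup>2 \<partial>M) + c2 * (\<integral>\<omega>. S \<omega> \<partial>M)
      - c3 * (\<integral>\<omega>. (norm (b \<omega>))\<^sup>2 \<partial>M) - \<alpha> / 2 * (\<integral>\<omega>. (norm (Gx \<omega>))\<^sup>2 \<partial>M)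
      + \<alpha>\<^sup>2 * L / 2 * (\<sigma>\<^sup>2 / real CARD('n))"
    unfolding B1(2) B2(2) by simp
  have eq: "\<alpha>\<^sup>2 * L / 2 * (\<sigma>\<^sup>2 / real CARD('n)) = \<alpha>\<^sup>2 * L * \<sigma>\<^sup>2 / (2 * real CARD('n))" by simp
  show ?thesis
    using F unfolding eq c1_def c2_def c3_def m_def Z_def S_def b_def Gx_def G_def by linarith
qed

end

theorem lemma1:
  fixes M :: "'a measure"
    and W :: "real^'n::finite^'n"
    and D :: "'n \<Rightarrow> (real^'p::finite) measure"
    and F :: "'n \<Rightarrow> real^'d::finite \<Rightarrow> real^'p \<Rightarrow> real"
    and gF :: "'n \<Rightarrow> real^'d \<Rightarrow> real^'p \<Rightarrow> real^'d"
    and gf :: "'n \<Rightarrow> real^'d \<Rightarrow> real^'d"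
    and \<xi> :: "'n \<Rightarrow> nat \<Rightarrow> 'a \<Rightarrow> real^'p"
    and X Mm :: "nat \<Rightarrow> 'a \<Rightarrow> 'n \<Rightarrow> real^'d"
    and x0 :: "real^'d"
    and \<alpha> \<beta> L \<sigma> :: real
    and t :: nat
  defines "f \<equiv> \<lambda>i x. \<integral>s. F i x s \<partial>D i"
  defines "fbar \<equiv> \<lambda>x. (1 / real CARD('n)) * (\<Sum>i\<in>UNIV. f i x)"
  assumes A1: "mixing_matrix W"
    and grad_F: "\<And>i x s. GDERIV (\<lambda>y. F i y s) x :> gF i x s"
    and gF_meas: "\<And>i. (\<lambda>(x, s). gF i x s) \<in> borel_measurable borel"
    and grad_f: "\<And>i x. GDERIV (f i) x :> gf i x"
    and smooth: "\<And>i x y. norm (gf i x - gf i y) \<le> L * norm (x - y)"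
    and bdd_below: "\<And>i. \<exists>b. \<forall>x. b \<le> f i x"
    and prob: "prob_space M"
    and D_prob: "\<And>i. prob_space (D i)"
    and D_sets: "\<And>i. sets (D i) = sets borel"
    and \<xi>_meas: "\<And>i s. \<xi> i s \<in> borel_measurable M"
    and \<xi>_distr: "\<And>i s. distr M borel (\<xi> i s) = D i"
    and \<xi>_indep: "prob_space.indep_vars M (\<lambda>_. borel) (\<lambda>(i, s). \<xi> i s) UNIV"
    and unbiased: "\<And>s i y j. y \<in> borel_measurable (filt M \<xi> s) \<Longrightarrow>
        AE \<omega> in M. real_cond_exp M (filt M \<xi> s)
           (\<lambda>\<omega>. (gF i (y \<omega>) (\<xi> i s \<omega>) - gf i (y \<omega>)) $ j) \<omega> = 0"
    and variance: "\<And>s i y. y \<in> borel_measurable (filt M \<xi> s) \<Longrightarrow>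
        AE \<omega> in M. nn_cond_exp M (filt M \<xi> s)
           (\<lambda>\<omega>. ennreal ((norm (gF i (y \<omega>) (\<xi> i s \<omega>) - gf i (y \<omega>)))\<^sup>2)) \<omega> \<le> ennreal (\<sigma>\<^sup>2)"
    and alpha: "\<alpha> > 0"
    and beta: "0 \<le> \<beta>" "\<beta> < 1"
    and iter: "edm_iterates W \<alpha> \<beta> gF \<xi> x0 X Mm"
  shows "(\<integral>\<omega>. fbar (zseq \<beta> X (Suc t) \<omega>) \<partial>M)
    \<le> (\<integral>\<omega>. fbar (zseq \<beta> X t \<omega>) \<partial>M)
     + \<alpha>\<^sup>2 * L * \<beta> / (2 * (1 - \<beta>)) * (\<integral>\<omega>. (norm (mbar_prev Mm t \<omega>))\<^sup>2 \<partial>M)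
     + \<alpha> * L\<^sup>2 / (2 * real CARD('n))
         * (\<integral>\<omega>. (\<Sum>i\<in>UNIV. (norm (X t \<omega> i - avg (X t \<omega>)))\<^sup>2) \<partial>M)
     + \<alpha>\<^sup>2 * L * \<sigma>\<^sup>2 / (2 * real CARD('n))
     - \<alpha> / 2 * (1 - \<beta> * \<alpha> * L / (1 - \<beta>) - \<alpha> * L)
         * (\<integral>\<omega>. (norm (avg (\<lambda>i. gf i (X t \<omega> i))))\<^sup>2 \<partial>M)
     - \<alpha> / 2 * (\<integral>\<omega>. (norm (avg (\<lambda>i. gf i (avg (X t \<omega>)))))\<^sup>2 \<partial>M)"
proof -
  interpret E: edm M W gF gf f \<xi> X Mm x0 \<alpha> \<beta> L \<sigma>
  proof (rule edm.intro[OF prob], rule edm_axioms.intro)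
    show "mixing_matrix W" by (rule A1)
    show "\<And>i. (\<lambda>(x, s). gF i x s) \<in> borel_measurable borel" by (rule gF_meas)
    show "\<And>i x. GDERIV (f i) x :> gf i x" by (rule grad_f)
    show "\<And>i x y. norm (gf i x - gf i y) \<le> L * norm (x - y)" by (rule smooth)
    show "\<And>i. \<exists>b. \<forall>x. b \<le> f i x" by (rule bdd_below)
    show "\<And>i s. \<xi> i s \<in> borel_measurable M" by (rule \<xi>_meas)
    show "prob_space.indep_vars M (\<lambda>_. borel) (\<lambda>(i, s). \<xi> i s) UNIV" by (rule \<xi>_indep)
    show "\<And>s i y j. y \<in> borel_measurable (filt M \<xi> s) \<Longrightarrow>
        AE \<omega> in M. real_cond_exp M (filt M \<xi> s)
           (\<lambda>\<omega>. (gF i (y \<omega>) (\<xi> i s \<omega>) - gf i (y \<omega>)) $ j) \<omega> = 0" by (rule unbiased)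
    show "\<And>s i y. y \<in> borel_measurable (filt M \<xi> s) \<Longrightarrow>
        AE \<omega> in M. nn_cond_exp M (filt M \<xi> s)
           (\<lambda>\<omega>. ennreal ((norm (gF i (y \<omega>) (\<xi> i s \<omega>) - gf i (y \<omega>)))\<^sup>2)) \<omega> \<le> ennreal (\<sigma>\<^sup>2)" by (rule variance)
    show "\<alpha> > 0" by (rule alpha)
    show "0 \<le> \<beta>" "\<beta> < 1" by (rule beta(1), rule beta(2))
    show "edm_iterates W \<alpha> \<beta> gF \<xi> x0 X Mm" by (rule iter)
  qed
  have fbeq: "fbar = E.fb" by (simp add: fbar_def E.fb_def[abs_def])
  show ?thesis unfolding fbeq by (rule E.main)
qed

end
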